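(* Let $\sigma>0$, $\bar\gamma>0$, $c_\infty\ge0$, and for $\gamma\in(0,\bar\gamma]$ let $\tau_\gamma:[0,\infty)\to[0,\infty)$ be non-decreasing with $\tau_\gamma(0)=0$, such that there exist $R_1,L\ge0$, $m>0$ with $\sup_{r>0}\tau_\gamma(r)/r\le1+\gamma L$ and $\sup_{r>R_1}\tau_\gamma(r)/r\le1-\gamma m$ for all $\gamma\in(0,\bar\gamma]$. Let $Q_\gamma$ be the Markov kernel on $[0,\infty)$ $$Q_\gamma(w,A)=\delta_0(A)\int_{\mathbb{R}}\bar p_{\sigma^2\gamma}(\tau_\gamma(w)+\gamma c_\infty,g)\varphi(g)dg+\int_{\mathbb{R}}\mathbb{1}_A(\tau_\gamma(w)+\gamma c_\infty-2\sigma\gamma^{1/2}g)\{1-\bar p_{\sigma^2\gamma}(\tau_\gamma(w)+\gamma c_\infty,g)\}\varphi(g)dg,$$ with $\bar p_{\sigma^2\gamma}(a,g)=1\wedge\varphi_{\sigma^2\gamma}(a-\sigma\sqrt\gamma g)/\varphi_{\sigma^2\gamma}(\sigma\sqrt\gamma g)$. Then for every $\gamma\in(0,\bar\gamma]$, $Q_\gamma$ admits a unique invariant probability measure $\mu_\gamma$ and is geometrically ergodic. Moreover $\mu_\gamma(\{0\})>0$ and $\mu_\gamma$ is absolutely continuous with respect to $\delta_0+\mathrm{Leb}$ on $[0,\infty)$. Finally, if $c_\infty\ne0$, then $\mu_\gamma$ and $\delta_0+\mathrm{Leb}$ are equivalent (mutually absolutely continuous).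
   Context: $\varphi$ is the standard normal density and $\varphi_s(t)=(2\pi s)^{-1/2}e^{-t^2/(2s)}$; Leb is Lebesgue measure on $[0,\infty)$. *)

theory Defs
  imports "HOL-Probability.Probability"
begin

definition phi :: "real \<Rightarrow> real" where
  "phi t = exp (- t\<^sup>2 / 2) / sqrt (2 * pi)"

definition phi_var :: "real \<Rightarrow> real \<Rightarrow> real" where
  "phi_var s t = exp (- t\<^sup>2 / (2 * s)) / sqrt (2 * pi * s)"

definition pbar :: "real \<Rightarrow> real \<Rightarrow> real \<Rightarrow> real \<Rightarrow> real" where
  "pbar \<sigma> \<gamma> a g =
     min 1 (phi_var (\<sigma>\<^sup>2 * \<gamma>) (a - \<sigma> * sqrt \<gamma> * g) / phi_var (\<sigma>\<^sup>2 * \<gamma>) (\<sigma> * sqrt \<gamma> * g))"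

definition state_space :: "real measure" where
  "state_space = restrict_space borel {0..}"

definition Qfun :: "real \<Rightarrow> real \<Rightarrow> (real \<Rightarrow> real \<Rightarrow> real) \<Rightarrow> real \<Rightarrow> real \<Rightarrow> real set \<Rightarrow> real" where
  "Qfun \<sigma> c \<tau> \<gamma> w A =
     (let a = \<tau> \<gamma> w + \<gamma> * c in
        indicator A 0 * (LINT g|lborel. pbar \<sigma> \<gamma> a g * phi g)
      + (LINT g|lborel. indicator A (a - 2 * \<sigma> * sqrt \<gamma> * g) * (1 - pbar \<sigma> \<gamma> a g) * phi g))"

definition Qmeas :: "real \<Rightarrow> real \<Rightarrow> (real \<Rightarrow> real \<Rightarrow> real) \<Rightarrow> real \<Rightarrow> real \<Rightarrow> real measure" where
  "Qmeas \<sigma> c \<tau> \<gamma> w =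
     measure_of {0..} (sets state_space) (\<lambda>A. ennreal (Qfun \<sigma> c \<tau> \<gamma> w A))"

fun Qpow :: "real \<Rightarrow> real \<Rightarrow> (real \<Rightarrow> real \<Rightarrow> real) \<Rightarrow> real \<Rightarrow> nat \<Rightarrow> real \<Rightarrow> real set \<Rightarrow> real" where
  "Qpow \<sigma> c \<tau> \<gamma> 0 w A = indicator A w"
| "Qpow \<sigma> c \<tau> \<gamma> (Suc n) w A = (LINT y|Qmeas \<sigma> c \<tau> \<gamma> w. Qpow \<sigma> c \<tau> \<gamma> n y A)"

definition invariant_prob :: "real \<Rightarrow> real \<Rightarrow> (real \<Rightarrow> real \<Rightarrow> real) \<Rightarrow> real \<Rightarrow> real measure \<Rightarrow> bool" where
  "invariant_prob \<sigma> c \<tau> \<gamma> \<mu> \<longleftrightarrow>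
     sets \<mu> = sets state_space \<and> prob_space \<mu> \<and>
     (\<forall>A \<in> sets state_space.
        emeasure \<mu> A = (\<integral>\<^sup>+ w. emeasure (Qmeas \<sigma> c \<tau> \<gamma> w) A \<partial>\<mu>))"

definition tv_dist :: "real \<Rightarrow> real \<Rightarrow> (real \<Rightarrow> real \<Rightarrow> real) \<Rightarrow> real \<Rightarrow> real measure \<Rightarrow> nat \<Rightarrow> real \<Rightarrow> real" where
  "tv_dist \<sigma> c \<tau> \<gamma> \<mu> n w =
     (SUP A \<in> sets state_space. \<bar>Qpow \<sigma> c \<tau> \<gamma> n w A - measure \<mu> A\<bar>)"

definition geom_ergodic :: "real \<Rightarrow> real \<Rightarrow> (real \<Rightarrow> real \<Rightarrow> real) \<Rightarrow> real \<Rightarrow> real measure \<Rightarrow> bool" where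
  "geom_ergodic \<sigma> c \<tau> \<gamma> \<mu> \<longleftrightarrow>
     (\<exists>\<rho>::real. 0 \<le> \<rho> \<and> \<rho> < 1 \<and>
        (\<exists>C :: real \<Rightarrow> real. \<forall>w \<ge> 0. \<forall>n. tv_dist \<sigma> c \<tau> \<gamma> \<mu> n w \<le> C w * \<rho> ^ n))"

definition ref_meas :: "real measure" where
  "ref_meas = measure_of {0..} (sets state_space) (\<lambda>A. indicator A 0 + emeasure lborel A)"

end

theory Submission
  imports Defs
begin

lemma phi_std: "phi = std_normal_density"
  by (simp add: fun_eq_iff phi_def std_normal_density_def)

lemma phi_nonneg[simp]: "0 \<le> phi g"
  by (simp add: phi_def)

lemma phi_pos: "0 < phi g"
  by (simp add: phi_def)

lemma phi_meas[measurable]: "phi \<in> borel_measurable borel"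
  unfolding phi_def by measurable

lemma integrable_phi: "integrable lborel phi"
  by (simp add: phi_std)

lemma integral_phi: "(\<integral>g. phi g \<partial>lborel) = 1"
  by (simp add: phi_std)

lemma nn_integral_phi: "(\<integral>\<^sup>+g. ennreal (phi g) \<partial>lborel) = 1"
  by (subst nn_integral_eq_integral) (auto simp: integrable_phi integral_phi)

lemma integrable_abs_phi: "integrable lborel (\<lambda>g. phi g * \<bar>g\<bar>)"
  using integrable_std_normal_moment_abs[of 1] by (simp add: phi_std)

lemma integral_abs_phi: "(\<integral>g. phi g * \<bar>g\<bar> \<partial>lborel) = sqrt (2 / pi)"
  using integral_std_normal_moment_abs_odd[of 0] by (simp add: phi_std)

lemma pbar_eq:
  assumes "\<sigma> > 0" "\<gamma> > 0"
  shows "pbar \<sigma> \<gamma> a g = min 1 (exp ((a * (2 * \<sigma> * sqrt \<gamma> * g - a)) / (2 * (\<sigma>\<^sup>2 * \<gamma>))))"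
proof -
  define v where "v = \<sigma>\<^sup>2 * \<gamma>"
  have v: "v > 0" using assms by (simp add: v_def)
  have sq: "(\<sigma> * sqrt \<gamma>)\<^sup>2 = v" using assms by (simp add: v_def power_mult_distrib)
  have "phi_var v (a - \<sigma> * sqrt \<gamma> * g) / phi_var v (\<sigma> * sqrt \<gamma> * g)
      = exp (- (a - \<sigma> * sqrt \<gamma> * g)\<^sup>2 / (2 * v)) / exp (- (\<sigma> * sqrt \<gamma> * g)\<^sup>2 / (2 * v))"
    using v by (simp add: phi_var_def)
  also have "\<dots> = exp (- (a - \<sigma> * sqrt \<gamma> * g)\<^sup>2 / (2 * v) - (- (\<sigma> * sqrt \<gamma> * g)\<^sup>2 / (2 * v)))"
    by (rule exp_diff[symmetric])
  also have "- (a - \<sigma> * sqrt \<gamma> * g)\<^sup>2 / (2 * v) - (- (\<sigma> * sqrt \<gamma> * g)\<^sup>2 / (2 * v))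
      = (a * (2 * \<sigma> * sqrt \<gamma> * g - a)) / (2 * v)"
    using v by (simp add: field_simps power2_eq_square)
  finally show ?thesis unfolding pbar_def v_def by simp
qed

lemma pbar_nonneg: "\<sigma> > 0 \<Longrightarrow> \<gamma> > 0 \<Longrightarrow> 0 \<le> pbar \<sigma> \<gamma> a g"
  by (simp add: pbar_eq)

lemma pbar_le1: "pbar \<sigma> \<gamma> a g \<le> 1"
  by (simp add: pbar_def)

lemma pbar_one:
  assumes "\<sigma> > 0" "\<gamma> > 0" "0 \<le> a" "a \<le> 2 * \<sigma> * sqrt \<gamma> * g"
  shows "pbar \<sigma> \<gamma> a g = 1"
proof -
  have "0 \<le> a * (2 * \<sigma> * sqrt \<gamma> * g - a)" using assms by simp
  then have "0 \<le> (a * (2 * \<sigma> * sqrt \<gamma> * g - a)) / (2 * (\<sigma>\<^sup>2 * \<gamma>))"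
    using assms by simp
  then show ?thesis using assms by (simp add: pbar_eq)
qed

lemma pbar_lt1:
  assumes "\<sigma> > 0" "\<gamma> > 0" "0 < a" "2 * \<sigma> * sqrt \<gamma> * g < a"
  shows "pbar \<sigma> \<gamma> a g < 1"
proof -
  have "a * (2 * \<sigma> * sqrt \<gamma> * g - a) < 0" using assms by (simp add: mult_pos_neg)
  then have "(a * (2 * \<sigma> * sqrt \<gamma> * g - a)) / (2 * (\<sigma>\<^sup>2 * \<gamma>)) < 0"
    using assms by (simp add: divide_neg_pos)
  then show ?thesis using assms by (simp add: pbar_eq)
qed

lemma pbar_meas[measurable]:
  "(\<lambda>x. pbar \<sigma> \<gamma> (fst x) (snd x)) \<in> borel_measurable (borel \<Otimes>\<^sub>M borel)"
  unfolding pbar_def phi_var_def by measurable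

lemma pbar_meas1[measurable]: "pbar \<sigma> \<gamma> a \<in> borel_measurable borel"
  unfolding pbar_def phi_var_def by measurable


lemma space_ss[simp]: "space state_space = {0..}"
  by (simp add: state_space_def)

lemma sets_ss_iff: "B \<in> sets state_space \<longleftrightarrow> B \<subseteq> {0..} \<and> B \<in> sets borel"
  unfolding state_space_def by (rule sets_restrict_space_iff) simp

lemma sets_ss_borel: "B \<in> sets state_space \<Longrightarrow> B \<in> sets borel"
  by (simp add: sets_ss_iff)

lemma measurable_ss_iff: "f \<in> borel_measurable state_space \<longleftrightarrow> f \<in> borel_measurable (restrict_space borel {0..})"
  by (simp add: state_space_def)

definition Wt :: "real \<Rightarrow> real \<Rightarrow> real \<Rightarrow> real \<times> bool \<Rightarrow> ennreal" where
  "Wt \<sigma> \<gamma> a x = ennreal ((if snd x then pbar \<sigma> \<gamma> a (fst x) else 1 - pbar \<sigma> \<gamma> a (fst x)) * phi (fst x))"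

definition Ft :: "real \<Rightarrow> real \<Rightarrow> real \<Rightarrow> real \<times> bool \<Rightarrow> real" where
  "Ft \<sigma> \<gamma> a x = (if snd x then 0 else max 0 (a - 2 * \<sigma> * sqrt \<gamma> * fst x))"

definition PB :: "(real \<times> bool) measure" where
  "PB = lborel \<Otimes>\<^sub>M count_space UNIV"

definition Kmeas :: "real \<Rightarrow> real \<Rightarrow> real \<Rightarrow> real measure" where
  "Kmeas \<sigma> \<gamma> a = distr (density PB (Wt \<sigma> \<gamma> a)) state_space (Ft \<sigma> \<gamma> a)"

lemma Wt_meas[measurable]: "Wt \<sigma> \<gamma> a \<in> borel_measurable PB"
  unfolding Wt_def PB_def by measurable

lemma Ft_meas[measurable]: "Ft \<sigma> \<gamma> a \<in> measurable PB state_space"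
  unfolding state_space_def
proof (rule measurable_restrict_space2)
  show "Ft \<sigma> \<gamma> a \<in> space PB \<rightarrow> {0..}" by (auto simp: Ft_def)
  show "Ft \<sigma> \<gamma> a \<in> borel_measurable PB" unfolding Ft_def PB_def by measurable
qed

interpretation PBsf: pair_sigma_finite lborel "count_space (UNIV::bool set)"
  by (intro pair_sigma_finite.intro sigma_finite_lborel sigma_finite_measure_count_space_finite) simp

lemma sets_Kmeas[simp]: "sets (Kmeas \<sigma> \<gamma> a) = sets state_space"
  by (simp add: Kmeas_def)

lemma space_Kmeas[simp]: "space (Kmeas \<sigma> \<gamma> a) = {0..}"
  by (simp add: Kmeas_def)

lemma Kmeas_nn:
  assumes f: "f \<in> borel_measurable state_space"
  shows "(\<integral>\<^sup>+y. f y \<partial>Kmeas \<sigma> \<gamma> a) =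
    (\<integral>\<^sup>+g. ennreal (pbar \<sigma> \<gamma> a g * phi g) * f 0
          + ennreal ((1 - pbar \<sigma> \<gamma> a g) * phi g) * f (max 0 (a - 2 * \<sigma> * sqrt \<gamma> * g)) \<partial>lborel)"
proof -
  have "(\<integral>\<^sup>+y. f y \<partial>Kmeas \<sigma> \<gamma> a) = (\<integral>\<^sup>+x. f (Ft \<sigma> \<gamma> a x) \<partial>density PB (Wt \<sigma> \<gamma> a))"
    unfolding Kmeas_def by (rule nn_integral_distr) (auto simp: f Ft_meas)
  also have "\<dots> = (\<integral>\<^sup>+x. Wt \<sigma> \<gamma> a x * f (Ft \<sigma> \<gamma> a x) \<partial>PB)"
    by (rule nn_integral_density) (auto intro: measurable_compose[OF Ft_meas f])
  also have "\<dots> = (\<integral>\<^sup>+g. \<integral>\<^sup>+b. Wt \<sigma> \<gamma> a (g, b) * f (Ft \<sigma> \<gamma> a (g, b)) \<partial>count_space UNIV \<partial>lborel)"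
    unfolding PB_def
    by (rule PBsf.M2.nn_integral_fst[symmetric]) (use f in \<open>simp add: PB_def[symmetric]\<close>)
  also have "\<dots> = (\<integral>\<^sup>+g. ennreal (pbar \<sigma> \<gamma> a g * phi g) * f 0
          + ennreal ((1 - pbar \<sigma> \<gamma> a g) * phi g) * f (max 0 (a - 2 * \<sigma> * sqrt \<gamma> * g)) \<partial>lborel)"
    by (rule nn_integral_cong) (simp add: nn_integral_count_space_finite UNIV_bool Wt_def Ft_def add.commute)
  finally show ?thesis .
qed


context
  fixes \<sigma> \<gamma> :: real
  assumes sig: "\<sigma> > 0" and gam: "\<gamma> > 0"
begin

lemma Kmeas_emeasure:
  assumes B: "B \<in> sets state_space"
  shows "emeasure (Kmeas \<sigma> \<gamma> a) B =
    (\<integral>\<^sup>+g. ennreal (pbar \<sigma> \<gamma> a g * phi g) * indicator B 0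
          + ennreal ((1 - pbar \<sigma> \<gamma> a g) * phi g) * indicator B (max 0 (a - 2 * \<sigma> * sqrt \<gamma> * g)) \<partial>lborel)"
  using Kmeas_nn[of "indicator B" \<sigma> \<gamma> a] B by simp

lemma Kmeas_prob: "prob_space (Kmeas \<sigma> \<gamma> a)"
proof
  have "emeasure (Kmeas \<sigma> \<gamma> a) (space (Kmeas \<sigma> \<gamma> a)) = (\<integral>\<^sup>+g. ennreal (phi g) \<partial>lborel)"
    apply (subst Kmeas_emeasure)
     apply (simp add: sets_ss_iff)
    apply (rule nn_integral_cong)
    subgoal for g
    proof -
      have "ennreal (pbar \<sigma> \<gamma> a g * phi g) + ennreal ((1 - pbar \<sigma> \<gamma> a g) * phi g)
          = ennreal (pbar \<sigma> \<gamma> a g * phi g + (1 - pbar \<sigma> \<gamma> a g) * phi g)"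
        by (rule ennreal_plus[symmetric]) (simp_all add: pbar_nonneg[OF sig gam] pbar_le1)
      also have "\<dots> = ennreal (phi g)" by (simp add: algebra_simps)
      finally show ?thesis by simp
    qed
    done
  then show "emeasure (Kmeas \<sigma> \<gamma> a) (space (Kmeas \<sigma> \<gamma> a)) = 1"
    by (simp add: nn_integral_phi)
qed

lemma Kmeas_measurable: "(\<lambda>a. Kmeas \<sigma> \<gamma> a) \<in> borel \<rightarrow>\<^sub>M subprob_algebra state_space"
proof (rule measurable_subprob_algebra)
  fix a show "subprob_space (Kmeas \<sigma> \<gamma> a)"
    using Kmeas_prob by (simp add: prob_space_imp_subprob_space)
  show "sets (Kmeas \<sigma> \<gamma> a) = sets state_space" by simp
next
  fix B assume B: "B \<in> sets state_space"
  then have Bb[measurable]: "B \<in> sets borel" by (simp add: sets_ss_iff)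
  have "(\<lambda>a. \<integral>\<^sup>+g. ennreal (pbar \<sigma> \<gamma> a g * phi g) * indicator B 0
          + ennreal ((1 - pbar \<sigma> \<gamma> a g) * phi g) * indicator B (max 0 (a - 2 * \<sigma> * sqrt \<gamma> * g)) \<partial>lborel)
        \<in> borel_measurable borel"
    by measurable
  then show "(\<lambda>a. emeasure (Kmeas \<sigma> \<gamma> a) B) \<in> borel_measurable borel"
    by (subst measurable_cong[OF Kmeas_emeasure[OF B]]) auto
qed

end


context
  fixes \<sigma> \<gamma> :: real
  assumes sig: "\<sigma> > 0" and gam: "\<gamma> > 0"
begin

lemma max_pbar_eq:
  assumes a: "0 \<le> a"
  shows "indicator B (max 0 (a - 2 * \<sigma> * sqrt \<gamma> * g)) * (1 - pbar \<sigma> \<gamma> a g)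
       = (indicator B (a - 2 * \<sigma> * sqrt \<gamma> * g) * (1 - pbar \<sigma> \<gamma> a g) :: real)"
proof (cases "0 \<le> a - 2 * \<sigma> * sqrt \<gamma> * g")
  case True then show ?thesis by (simp add: max_def)
next
  case False
  then have "pbar \<sigma> \<gamma> a g = 1" by (intro pbar_one[OF sig gam a]) simp
  then show ?thesis by simp
qed

lemma Qfun_Kmeas:
  assumes a: "0 \<le> a" and B: "B \<in> sets state_space"
  shows "ennreal (indicator B 0 * (LINT g|lborel. pbar \<sigma> \<gamma> a g * phi g)
      + (LINT g|lborel. indicator B (a - 2 * \<sigma> * sqrt \<gamma> * g) * (1 - pbar \<sigma> \<gamma> a g) * phi g))
    = emeasure (Kmeas \<sigma> \<gamma> a) B"
proof -
  have Bb[measurable]: "B \<in> sets borel" using B by (simp add: sets_ss_iff)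
  define f1 where "f1 g = indicator B 0 * (pbar \<sigma> \<gamma> a g * phi g)" for g
  define f2 where "f2 g = indicator B (a - 2 * \<sigma> * sqrt \<gamma> * g) * (1 - pbar \<sigma> \<gamma> a g) * phi g" for g
  have f1m[measurable]: "f1 \<in> borel_measurable lborel" unfolding f1_def by measurable
  have f2m[measurable]: "f2 \<in> borel_measurable lborel" unfolding f2_def by measurable
  have f1n: "0 \<le> f1 g" for g by (simp add: f1_def pbar_nonneg[OF sig gam])
  have f2n: "0 \<le> f2 g" for g by (simp add: f2_def pbar_le1)
  have i1: "integrable lborel f1"
    by (rule Bochner_Integration.integrable_bound[OF integrable_phi f1m])
       (auto simp: f1_def pbar_nonneg[OF sig gam] pbar_le1 indicator_def mult_le_one
             intro!: AE_I2 mult_left_le_one_le)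
  have i2: "integrable lborel f2"
    by (rule Bochner_Integration.integrable_bound[OF integrable_phi f2m])
       (auto simp: f2_def pbar_nonneg[OF sig gam] pbar_le1 indicator_def mult_le_one
             intro!: AE_I2 mult_left_le_one_le)
  have "emeasure (Kmeas \<sigma> \<gamma> a) B = (\<integral>\<^sup>+g. ennreal (f1 g + f2 g) \<partial>lborel)"
    unfolding Kmeas_emeasure[OF sig gam B]
  proof (rule nn_integral_cong)
    fix g
    have e1: "ennreal (pbar \<sigma> \<gamma> a g * phi g) * indicator B 0 = ennreal (f1 g)"
      by (simp add: f1_def indicator_def)
    have e2: "ennreal ((1 - pbar \<sigma> \<gamma> a g) * phi g) * indicator B (max 0 (a - 2 * \<sigma> * sqrt \<gamma> * g))
        = ennreal (indicator B (max 0 (a - 2 * \<sigma> * sqrt \<gamma> * g)) * (1 - pbar \<sigma> \<gamma> a g) * phi g)"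
      by (simp add: indicator_def)
    have e3: "indicator B (max 0 (a - 2 * \<sigma> * sqrt \<gamma> * g)) * (1 - pbar \<sigma> \<gamma> a g) * phi g = f2 g"
      unfolding f2_def max_pbar_eq[OF a] ..
    show "ennreal (pbar \<sigma> \<gamma> a g * phi g) * indicator B 0 +
        ennreal ((1 - pbar \<sigma> \<gamma> a g) * phi g) * indicator B (max 0 (a - 2 * \<sigma> * sqrt \<gamma> * g))
        = ennreal (f1 g + f2 g)"
      unfolding e1 e2 e3 by (rule ennreal_plus[symmetric]) (simp_all add: f1n f2n)
  qed
  also have "\<dots> = ennreal (LINT g|lborel. f1 g + f2 g)"
    by (rule nn_integral_eq_integral) (auto simp: i1 i2 f1n f2n)
  also have "(LINT g|lborel. f1 g + f2 g) = (LINT g|lborel. f1 g) + (LINT g|lborel. f2 g)"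
    by (rule Bochner_Integration.integral_add[OF i1 i2])
  also have "(LINT g|lborel. f1 g) = indicator B 0 * (LINT g|lborel. pbar \<sigma> \<gamma> a g * phi g)"
    unfolding f1_def by simp
  finally show ?thesis unfolding f2_def by simp
qed

lemma Qmeas_Kmeas:
  assumes a: "0 \<le> \<tau> \<gamma> w + \<gamma> * c"
  shows "Qmeas \<sigma> c \<tau> \<gamma> w = Kmeas \<sigma> \<gamma> (\<tau> \<gamma> w + \<gamma> * c)"
proof -
  have ss: "sigma_sets {0..} (sets state_space) = sets state_space"
    using sets.sigma_sets_eq[of state_space] by simp
  have "Qmeas \<sigma> c \<tau> \<gamma> w = measure_of {0..} (sets state_space) (emeasure (Kmeas \<sigma> \<gamma> (\<tau> \<gamma> w + \<gamma> * c)))"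
    unfolding Qmeas_def
  proof (rule measure_of_eq)
    show "sets state_space \<subseteq> Pow {0..}" using sets.space_closed[of state_space] by simp
    fix B assume "B \<in> sigma_sets {0..} (sets state_space)"
    then have B: "B \<in> sets state_space" by (simp add: ss)
    show "ennreal (Qfun \<sigma> c \<tau> \<gamma> w B) = emeasure (Kmeas \<sigma> \<gamma> (\<tau> \<gamma> w + \<gamma> * c)) B"
      unfolding Qfun_def Let_def by (rule Qfun_Kmeas[OF a B])
  qed
  also have "\<dots> = Kmeas \<sigma> \<gamma> (\<tau> \<gamma> w + \<gamma> * c)"
    using measure_of_of_measure[of "Kmeas \<sigma> \<gamma> (\<tau> \<gamma> w + \<gamma> * c)"] by simp
  finally show ?thesis .
qed

end


lemma phi_mono: "0 \<le> g \<Longrightarrow> g \<le> h \<Longrightarrow> phi h \<le> phi g"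
  unfolding phi_def by (intro divide_right_mono) (auto intro!: power_mono simp: )

context
  fixes \<sigma> \<gamma> :: real
  assumes sig: "\<sigma> > 0" and gam: "\<gamma> > 0"
begin

lemma Kmeas_drift:
  assumes a: "0 \<le> a"
  shows "(\<integral>\<^sup>+y. ennreal y \<partial>Kmeas \<sigma> \<gamma> a) \<le> ennreal (a + 2 * \<sigma> * sqrt \<gamma>)"
proof -
  define s2 where "s2 = 2 * \<sigma> * sqrt \<gamma>"
  have s2: "0 < s2" using sig gam by (simp add: s2_def)
  have "(\<integral>\<^sup>+y. ennreal y \<partial>Kmeas \<sigma> \<gamma> a) =
    (\<integral>\<^sup>+g. ennreal (pbar \<sigma> \<gamma> a g * phi g) * ennreal 0
          + ennreal ((1 - pbar \<sigma> \<gamma> a g) * phi g) * ennreal (max 0 (a - 2 * \<sigma> * sqrt \<gamma> * g)) \<partial>lborel)"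
    by (rule Kmeas_nn) (auto intro: measurable_restrict_space1 simp: state_space_def)
  also have "\<dots> \<le> (\<integral>\<^sup>+g. ennreal (a * phi g + s2 * (phi g * \<bar>g\<bar>)) \<partial>lborel)"
  proof (rule nn_integral_mono)
    fix g
    have p0: "0 \<le> 1 - pbar \<sigma> \<gamma> a g" "1 - pbar \<sigma> \<gamma> a g \<le> 1"
      using pbar_le1 pbar_nonneg[OF sig gam] by auto
    have m: "max 0 (a - s2 * g) \<le> a + s2 * \<bar>g\<bar>"
      using a s2 by (auto simp: max_def abs_if mult_less_0_iff)
    have "(1 - pbar \<sigma> \<gamma> a g) * phi g * max 0 (a - s2 * g) \<le> 1 * phi g * (a + s2 * \<bar>g\<bar>)"
      by (intro mult_mono m p0) auto
    then have "ennreal ((1 - pbar \<sigma> \<gamma> a g) * phi g * max 0 (a - s2 * g))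
        \<le> ennreal (a * phi g + s2 * (phi g * \<bar>g\<bar>))"
      by (intro ennreal_leI) (simp add: algebra_simps)
    moreover have "ennreal ((1 - pbar \<sigma> \<gamma> a g) * phi g) * ennreal (max 0 (a - s2 * g))
       = ennreal ((1 - pbar \<sigma> \<gamma> a g) * phi g * max 0 (a - s2 * g))"
      by (rule ennreal_mult[symmetric]) (use p0 in auto)
    ultimately have "ennreal ((1 - pbar \<sigma> \<gamma> a g) * phi g) * ennreal (max 0 (a - s2 * g))
        \<le> ennreal (a * phi g + s2 * (phi g * \<bar>g\<bar>))" by simp
    then show "ennreal (pbar \<sigma> \<gamma> a g * phi g) * ennreal 0
          + ennreal ((1 - pbar \<sigma> \<gamma> a g) * phi g) * ennreal (max 0 (a - 2 * \<sigma> * sqrt \<gamma> * g))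
        \<le> ennreal (a * phi g + s2 * (phi g * \<bar>g\<bar>))"
      by (simp add: s2_def mult.assoc)
  qed
  also have "\<dots> = ennreal (LINT g|lborel. a * phi g + s2 * (phi g * \<bar>g\<bar>))"
    using a s2 by (intro nn_integral_eq_integral) (auto simp: integrable_phi integrable_abs_phi)
  also have "(LINT g|lborel. a * phi g + s2 * (phi g * \<bar>g\<bar>)) = a + s2 * sqrt (2 / pi)"
    by (simp add: integrable_phi integrable_abs_phi integral_phi integral_abs_phi)
  also have "a + s2 * sqrt (2 / pi) \<le> a + s2"
  proof -
    have "2 / pi \<le> 1" using pi_gt3 by simp
    then have "sqrt (2 / pi) \<le> 1" by simp
    then show ?thesis using s2 by (simp add: mult_left_le)
  qed
  finally show ?thesis by (simp add: s2_def ennreal_leI)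
qed

lemma Kmeas_zero:
  assumes a: "0 \<le> a" and t: "0 \<le> t" and at: "a \<le> 2 * \<sigma> * sqrt \<gamma> * t"
  shows "ennreal (phi (t + 1)) \<le> emeasure (Kmeas \<sigma> \<gamma> a) {0}"
proof -
  have "ennreal (phi (t + 1)) = (\<integral>\<^sup>+g. ennreal (phi (t + 1)) * indicator {t..t+1} g \<partial>lborel)"
    by (subst nn_integral_cmult_indicator) auto
  also have "\<dots> \<le> (\<integral>\<^sup>+g. ennreal (pbar \<sigma> \<gamma> a g * phi g) * indicator {0::real} 0
          + ennreal ((1 - pbar \<sigma> \<gamma> a g) * phi g) * indicator {0} (max 0 (a - 2 * \<sigma> * sqrt \<gamma> * g)) \<partial>lborel)"
  proof (rule nn_integral_mono)
    fix g
    show "ennreal (phi (t + 1)) * indicator {t..t+1} g \<le> ennreal (pbar \<sigma> \<gamma> a g * phi g) * indicator {0::real} 0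
          + ennreal ((1 - pbar \<sigma> \<gamma> a g) * phi g) * indicator {0} (max 0 (a - 2 * \<sigma> * sqrt \<gamma> * g))"
    proof (cases "g \<in> {t..t+1}")
      case True
      have "a \<le> 2 * \<sigma> * sqrt \<gamma> * g"
        using at True sig gam by (smt (verit) atLeastAtMost_iff mult_left_mono mult_nonneg_nonneg real_sqrt_ge_zero)
      then have p1: "pbar \<sigma> \<gamma> a g = 1" by (rule pbar_one[OF sig gam a])
      have "phi (t + 1) \<le> phi g" using True t by (intro phi_mono) auto
      then show ?thesis using True p1 by (simp add: ennreal_leI)
    qed simp
  qed
  also have "\<dots> = emeasure (Kmeas \<sigma> \<gamma> a) {0}"
    by (rule Kmeas_emeasure[OF sig gam, symmetric]) (simp add: sets_ss_iff)
  finally show ?thesis .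
qed

lemma Kmeas_null1:
  assumes B: "B \<in> sets state_space" and B0: "0 \<notin> B" and BL: "emeasure lborel B = 0"
  shows "emeasure (Kmeas \<sigma> \<gamma> a) B = 0"
proof -
  have Bb[measurable]: "B \<in> sets borel" using B by (simp add: sets_ss_iff)
  have s2: "- (2 * \<sigma> * sqrt \<gamma>) \<noteq> 0" using sig gam by simp
  have "AE y in lborel. y \<notin> B" using BL by (intro AE_not_in) auto
  from AE_borel_affine[OF s2 _ this, of a]
  have ae: "AE g in lborel. a + - (2 * \<sigma> * sqrt \<gamma>) * g \<notin> B" by simp
  have "(\<integral>\<^sup>+g. ennreal (pbar \<sigma> \<gamma> a g * phi g) * indicator B 0
          + ennreal ((1 - pbar \<sigma> \<gamma> a g) * phi g) * indicator B (max 0 (a - 2 * \<sigma> * sqrt \<gamma> * g)) \<partial>lborel)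
     = 0"
  proof (subst nn_integral_0_iff_AE)
    show "(\<lambda>g. ennreal (pbar \<sigma> \<gamma> a g * phi g) * indicator B 0
          + ennreal ((1 - pbar \<sigma> \<gamma> a g) * phi g) * indicator B (max 0 (a - 2 * \<sigma> * sqrt \<gamma> * g))) \<in> borel_measurable lborel"
      by measurable
    show "AE g in lborel. ennreal (pbar \<sigma> \<gamma> a g * phi g) * indicator B 0
          + ennreal ((1 - pbar \<sigma> \<gamma> a g) * phi g) * indicator B (max 0 (a - 2 * \<sigma> * sqrt \<gamma> * g)) = 0"
      using ae
    proof eventually_elim
      case (elim g)
      then have "max 0 (a - 2 * \<sigma> * sqrt \<gamma> * g) \<notin> B" using B0 by (auto simp: max_def)
      then show ?case using B0 by simp
    qed
  qed
  then show ?thesis by (simp add: Kmeas_emeasure[OF sig gam B])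
qed

lemma Kmeas_null2:
  assumes a: "0 < a" and B: "B \<in> sets state_space" and K0: "emeasure (Kmeas \<sigma> \<gamma> a) B = 0"
  shows "emeasure lborel B = 0"
proof -
  define s2 where "s2 = 2 * \<sigma> * sqrt \<gamma>"
  have s2: "0 < s2" using sig gam by (simp add: s2_def)
  have Bb[measurable]: "B \<in> sets borel" using B by (simp add: sets_ss_iff)
  have B0: "B \<subseteq> {0..}" using B by (simp add: sets_ss_iff)
  have "AE g in lborel. ennreal (pbar \<sigma> \<gamma> a g * phi g) * indicator B 0
          + ennreal ((1 - pbar \<sigma> \<gamma> a g) * phi g) * indicator B (max 0 (a - 2 * \<sigma> * sqrt \<gamma> * g)) = 0"
    using K0 unfolding Kmeas_emeasure[OF sig gam B]
    by (subst (asm) nn_integral_0_iff_AE) auto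
  then have ae: "AE g in lborel. s2 * g < a \<longrightarrow> a - s2 * g \<notin> B"
  proof eventually_elim
    case (elim g)
    show ?case
    proof
      assume lt: "s2 * g < a"
      have "pbar \<sigma> \<gamma> a g < 1" using pbar_lt1[OF sig gam a] lt by (simp add: s2_def)
      then have "0 < (1 - pbar \<sigma> \<gamma> a g) * phi g" using phi_pos[of g] by simp
      then have "ennreal ((1 - pbar \<sigma> \<gamma> a g) * phi g) > 0" by (simp del: ennreal_less_zero_iff add: ennreal_less_zero_iff)
      then have "ennreal ((1 - pbar \<sigma> \<gamma> a g) * phi g) \<noteq> 0" by auto
      then have "indicator B (max 0 (a - s2 * g)) = (0::ennreal)"
        using elim by (auto simp: s2_def)
      then show "a - s2 * g \<notin> B" using lt by (auto simp: max_def split: if_splits)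
    qed
  qed
  have c: "- (1 / s2) \<noteq> 0" using s2 by simp
  have "AE y in lborel. s2 * (a / s2 + - (1 / s2) * y) < a \<longrightarrow> a - s2 * (a / s2 + - (1 / s2) * y) \<notin> B"
    by (rule AE_borel_affine[OF c _ ae]) measurable
  then have "AE y in lborel. 0 < y \<longrightarrow> y \<notin> B"
    using s2 by (simp add: field_simps zero_less_mult_iff)
  moreover have "AE y in lborel. y \<noteq> 0"
    by (rule AE_I[where N="{0}"]) auto
  ultimately have "AE y in lborel. y \<notin> B"
  proof eventually_elim
    case (elim y)
    then show ?case using B0 by (auto simp: subset_eq)
  qed
  then show ?thesis
    by (subst (asm) AE_iff_measurable[of B]) auto
qed

end


primrec Qn :: "(real \<Rightarrow> real measure) \<Rightarrow> nat \<Rightarrow> real \<Rightarrow> real measure" where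
  "Qn Q 0 w = return state_space w"
| "Qn Q (Suc n) w = bind (Q w) (Qn Q n)"

locale chain =
  fixes Q :: "real \<Rightarrow> real measure" and lam K R \<alpha> :: real
  assumes Qm: "Q \<in> state_space \<rightarrow>\<^sub>M subprob_algebra state_space"
  and Qp: "\<And>x. 0 \<le> x \<Longrightarrow> prob_space (Q x)"
  and drift: "\<And>x. 0 \<le> x \<Longrightarrow> (\<integral>\<^sup>+y. ennreal y \<partial>Q x) \<le> ennreal (lam * x + K)"
  and lam0: "0 \<le> lam" and lam1: "lam < 1" and K: "0 < K"
  and R: "2 * K / (1 - lam) < R"
  and alpha: "0 < \<alpha>"
  and minor: "\<And>x. 0 \<le> x \<Longrightarrow> x \<le> R \<Longrightarrow> ennreal \<alpha> \<le> emeasure (Q x) {0}"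
begin

lemma Q_sets[simp]: "0 \<le> x \<Longrightarrow> sets (Q x) = sets state_space"
  using sets_kernel[OF Qm, of x] by simp

lemma Q_space[simp]: "0 \<le> x \<Longrightarrow> space (Q x) = {0..}"
  using sets_eq_imp_space_eq[OF Q_sets, of x] by simp

lemma Qn_meas: "Qn Q n \<in> state_space \<rightarrow>\<^sub>M subprob_algebra state_space"
proof (induction n)
  case 0 then show ?case by (simp add: return_measurable)
next
  case (Suc n)
  have "(\<lambda>x. bind (Q x) (Qn Q n)) \<in> state_space \<rightarrow>\<^sub>M subprob_algebra state_space"
    by (rule measurable_bind2[OF Qm Suc])
  then show ?case by simp
qed

lemma Qn_sets[simp]: "0 \<le> x \<Longrightarrow> sets (Qn Q n x) = sets state_space"
  using sets_kernel[OF Qn_meas, of x n] by simp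

lemma Qn_space[simp]: "0 \<le> x \<Longrightarrow> space (Qn Q n x) = {0..}"
  using sets_eq_imp_space_eq[OF Qn_sets, of x n] by simp

lemma Qn_prob: "0 \<le> x \<Longrightarrow> prob_space (Qn Q n x)"
proof (induction n arbitrary: x)
  case 0 then show ?case by (simp add: prob_space_return)
next
  case (Suc n)
  interpret prob_space "Q x" using Qp Suc by simp
  have m: "Qn Q n \<in> Q x \<rightarrow>\<^sub>M subprob_algebra state_space"
    using Qn_meas measurable_cong_sets[OF Q_sets[OF Suc.prems] refl] by blast
  have "prob_space (bind (Q x) (Qn Q n))"
    by (rule prob_space_bind[OF _ m]) (use Suc Q_space in \<open>auto intro!: AE_I2\<close>)
  then show ?case by simp
qed

lemma Qn0_fun: "Qn Q 0 = return state_space"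
  by (rule ext) simp

lemma Q_Qn1: "0 \<le> x \<Longrightarrow> Qn Q 1 x = Q x"
  by (simp add: Qn0_fun bind_return'')

lemma CK: "0 \<le> x \<Longrightarrow> Qn Q (k + n) x = bind (Qn Q k x) (Qn Q n)"
proof (induction k arbitrary: x)
  case 0
  then show ?case by (simp add: bind_return[OF Qn_meas])
next
  case (Suc k)
  have "Qn Q (Suc k + n) x = bind (Q x) (Qn Q (k + n))" by simp
  also have "\<dots> = bind (Q x) (\<lambda>y. bind (Qn Q k y) (Qn Q n))"
    by (rule bind_cong) (use Suc Q_space[OF Suc.prems] in auto)
  also have "\<dots> = bind (bind (Q x) (Qn Q k)) (Qn Q n)"
  proof -
    have "Qn Q k \<in> Q x \<rightarrow>\<^sub>M subprob_algebra state_space"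
      using Qn_meas measurable_cong_sets[OF Q_sets[OF Suc.prems] refl] by blast
    then show ?thesis by (rule bind_assoc[OF _ Qn_meas, symmetric])
  qed
  finally show ?case by simp
qed

lemma Qn_Suc':
  assumes x: "0 \<le> x" shows "Qn Q (Suc n) x = bind (Qn Q n x) Q"
proof -
  have "Qn Q (Suc n) x = Qn Q (n + 1) x" by simp
  also have "\<dots> = bind (Qn Q n x) (Qn Q 1)" by (rule CK[OF x])
  also have "\<dots> = bind (Qn Q n x) Q"
    apply (rule bind_cong[OF refl])
    apply (rule Q_Qn1)
    using x by simp
  finally show ?thesis .
qed

lemma measure_Qn_Suc:
  assumes x: "0 \<le> x" and A: "A \<in> sets state_space"
  shows "measure (Qn Q (Suc n) x) A = (\<integral>y. measure (Qn Q n y) A \<partial>Q x)"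
proof -
  interpret prob_space "Q x" using Qp x by simp
  have "Qn Q n \<in> Q x \<rightarrow>\<^sub>M subprob_algebra state_space"
    using Qn_meas measurable_cong_sets[OF Q_sets[OF x] refl] by blast
  then show ?thesis using measure_bind[of "Qn Q n" state_space A] A by simp
qed

lemma measure_Qn_CK:
  assumes x: "0 \<le> x" and A: "A \<in> sets state_space"
  shows "measure (Qn Q (k + n) x) A = (\<integral>y. measure (Qn Q n y) A \<partial>Qn Q k x)"
proof -
  interpret prob_space "Qn Q k x" using Qn_prob x by simp
  have "Qn Q n \<in> Qn Q k x \<rightarrow>\<^sub>M subprob_algebra state_space"
    using Qn_meas measurable_cong_sets[OF Qn_sets[OF x] refl] by blast
  then show ?thesis using measure_bind[of "Qn Q n" state_space A] A CK[OF x] by simp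
qed

lemma measure_Qn_meas[measurable]:
  "A \<in> sets state_space \<Longrightarrow> (\<lambda>y. measure (Qn Q n y) A) \<in> borel_measurable state_space"
  using measurable_compose[OF Qn_meas measurable_measure_subprob_algebra] by blast

lemma measure_Q_meas[measurable]:
  "A \<in> sets state_space \<Longrightarrow> (\<lambda>y. measure (Q y) A) \<in> borel_measurable state_space"
  using measurable_compose[OF Qm measurable_measure_subprob_algebra] by blast

end


lemma id_meas_ss[measurable]: "(\<lambda>y::real. y) \<in> borel_measurable state_space"
  unfolding state_space_def by (rule measurable_restrict_space1) simp

lemma int_from_nn:
  assumes P: "prob_space M" and sp: "space M = {0..}" and m: "(\<lambda>y::real. y) \<in> borel_measurable M"
    and nn: "(\<integral>\<^sup>+y. ennreal y \<partial>M) \<le> ennreal c" and c: "0 \<le> c"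
  shows "integrable M (\<lambda>y. y)" "(\<integral>y. y \<partial>M) \<le> c"
proof -
  show i: "integrable M (\<lambda>y. y)"
    by (rule integrableI_nonneg[OF m]) (use sp nn in \<open>auto intro!: AE_I2 le_less_trans[OF _ ennreal_less_top]\<close>)
  have "ennreal (\<integral>y. y \<partial>M) = (\<integral>\<^sup>+y. ennreal y \<partial>M)"
    by (rule nn_integral_eq_integral[symmetric, OF i]) (use sp in \<open>auto intro!: AE_I2\<close>)
  with nn have "ennreal (\<integral>y. y \<partial>M) \<le> ennreal c" by simp
  then show "(\<integral>y. y \<partial>M) \<le> c" using c by simp
qed

context chain
begin

lemma id_meas_Q: "0 \<le> x \<Longrightarrow> (\<lambda>y::real. y) \<in> borel_measurable (Q x)"
  using measurable_cong_sets[OF Q_sets refl] id_meas_ss by blast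

lemma id_meas_Qn: "0 \<le> x \<Longrightarrow> (\<lambda>y::real. y) \<in> borel_measurable (Qn Q n x)"
  using measurable_cong_sets[OF Qn_sets refl] id_meas_ss by blast

lemma Q_V:
  assumes x: "0 \<le> x"
  shows "integrable (Q x) (\<lambda>y. y)" "(\<integral>y. y \<partial>Q x) \<le> lam * x + K"
  using int_from_nn[OF Qp[OF x] Q_space[OF x] id_meas_Q[OF x] drift[OF x]] x lam0 K by auto

lemma Qn_moment: "(\<integral>\<^sup>+y. ennreal y \<partial>Qn Q k 0) \<le> ennreal (K / (1 - lam))"
proof (induction k)
  case 0
  have "(\<integral>\<^sup>+y. ennreal y \<partial>Qn Q 0 0) = ennreal 0"
    by (simp add: nn_integral_return)
  then show ?case by simp
next
  case (Suc k)
  interpret P: prob_space "Qn Q k 0" using Qn_prob by simp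
  have m: "Q \<in> Qn Q k 0 \<rightarrow>\<^sub>M subprob_algebra state_space"
    using Qm measurable_cong_sets[OF Qn_sets[of 0 k] refl] by blast
  have "(\<integral>\<^sup>+y. ennreal y \<partial>Qn Q (Suc k) 0) = (\<integral>\<^sup>+x. \<integral>\<^sup>+y. ennreal y \<partial>Q x \<partial>Qn Q k 0)"
    using Qn_Suc'[of 0 k] nn_integral_bind[OF _ m, of ennreal] by simp
  also have "\<dots> \<le> (\<integral>\<^sup>+x. ennreal lam * ennreal x + ennreal K \<partial>Qn Q k 0)"
  proof (rule nn_integral_mono)
    fix x assume "x \<in> space (Qn Q k 0)"
    then have x: "0 \<le> x" by simp
    have "ennreal (lam * x + K) = ennreal lam * ennreal x + ennreal K"
      using x lam0 K by (simp add: ennreal_plus ennreal_mult)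
    then show "(\<integral>\<^sup>+y. ennreal y \<partial>Q x) \<le> ennreal lam * ennreal x + ennreal K"
      using drift[OF x] by simp
  qed
  also have "\<dots> = ennreal lam * (\<integral>\<^sup>+x. ennreal x \<partial>Qn Q k 0) + ennreal K"
  proof -
    have m2: "(\<lambda>x. ennreal x) \<in> borel_measurable (Qn Q k 0)"
      using id_meas_Qn[of 0 k] by measurable
    have "(\<integral>\<^sup>+x. ennreal lam * ennreal x + ennreal K \<partial>Qn Q k 0)
        = (\<integral>\<^sup>+x. ennreal lam * ennreal x \<partial>Qn Q k 0) + (\<integral>\<^sup>+x. ennreal K \<partial>Qn Q k 0)"
      by (rule nn_integral_add) (use m2 in auto)
    also have "(\<integral>\<^sup>+x. ennreal lam * ennreal x \<partial>Qn Q k 0) = ennreal lam * (\<integral>\<^sup>+x. ennreal x \<partial>Qn Q k 0)"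
      by (rule nn_integral_cmult[OF m2])
    also have "(\<integral>\<^sup>+x. ennreal K \<partial>Qn Q k 0) = ennreal K"
      using P.emeasure_space_1 by simp
    finally show ?thesis .
  qed
  also have "\<dots> \<le> ennreal lam * ennreal (K / (1 - lam)) + ennreal K"
    by (intro add_mono mult_left_mono Suc) auto
  also have "\<dots> = ennreal (K / (1 - lam))"
  proof -
    have "lam * (K / (1 - lam)) + K = K / (1 - lam)"
      using lam1 by (simp add: field_simps)
    have k0: "0 \<le> K / (1 - lam)" using K lam1 by simp
    have k1: "0 \<le> lam * (K / (1 - lam))" using lam0 k0 by (rule mult_nonneg_nonneg)
    have "ennreal lam * ennreal (K / (1 - lam)) = ennreal (lam * (K / (1 - lam)))"
      by (rule ennreal_mult[symmetric, OF lam0 k0])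
    moreover have "ennreal (lam * (K / (1 - lam))) + ennreal K = ennreal (lam * (K / (1 - lam)) + K)"
      by (rule ennreal_plus[symmetric, OF k1]) (use K in simp)
    ultimately show ?thesis using \<open>lam * (K / (1 - lam)) + K = K / (1 - lam)\<close> by simp
  qed
  finally show ?case .
qed

lemma Qn_V:
  shows "integrable (Qn Q k 0) (\<lambda>y. y)" "(\<integral>y. y \<partial>Qn Q k 0) \<le> K / (1 - lam)"
  using int_from_nn[OF Qn_prob Qn_space id_meas_Qn Qn_moment] lam1 K by auto

lemma alpha_le1: "\<alpha> \<le> 1"
proof -
  interpret prob_space "Q 0" using Qp by simp
  have R0: "0 \<le> R" using R K lam1 by (smt (verit) divide_pos_pos)
  have "ennreal \<alpha> \<le> emeasure (Q 0) {0}" using minor[of 0] R0 by simp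
  also have "\<dots> \<le> 1" by (rule emeasure_le_1)
  finally have "ennreal \<alpha> \<le> 1" .
  then show ?thesis by (simp only: ennreal_le_1)
qed

lemma minor_int:
  assumes x: "0 \<le> x" "x \<le> R" and f: "integrable (Q x) f" and fn: "\<And>y. 0 \<le> y \<Longrightarrow> 0 \<le> f y"
  shows "\<alpha> * f 0 \<le> (\<integral>y. f y \<partial>Q x)"
proof -
  interpret prob_space "Q x" using Qp x by simp
  have s0: "{0} \<in> sets (Q x)" using x by (simp add: sets_ss_iff)
  have "ennreal \<alpha> \<le> emeasure (Q x) {0}" by (rule minor[OF x])
  then have a: "\<alpha> \<le> measure (Q x) {0}" by (simp add: emeasure_eq_measure)
  have "\<alpha> * f 0 \<le> measure (Q x) {0} * f 0" using a fn[of 0] by (simp add: mult_right_mono)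
  also have "\<dots> = (\<integral>y. f 0 * indicator {0} y \<partial>Q x)"
    using s0 by simp
  also have "\<dots> = (\<integral>y. f y * indicator {0} y \<partial>Q x)"
    by (rule Bochner_Integration.integral_cong) (auto simp: indicator_def)
  also have "\<dots> \<le> (\<integral>y. f y \<partial>Q x)"
  proof (rule integral_mono)
    show "integrable (Q x) (\<lambda>y. f y * indicator {0} y)"
      using integrable_mult_indicator[OF s0 f] by (simp add: mult.commute)
    show "integrable (Q x) f" by (rule f)
    fix y assume "y \<in> space (Q x)"
    then have "0 \<le> y" using x by simp
    then show "f y * indicator {0} y \<le> f y" using fn[of y] by (simp add: indicator_def)
  qed
  finally show ?thesis .
qed

end


context chain
begin

definition "beta = \<alpha> / (2 * K)"
definition "ab1 = (2 + 2 * beta * K + beta * lam * R) / (2 + beta * R)"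
definition "ab2 = max (1 - \<alpha> / 2) lam"
definition "ab = max ab1 ab2"

lemma R_pos: "0 < R" using R K lam1 by (smt (verit) divide_pos_pos)

lemma R2: "2 * K < (1 - lam) * R"
  using R lam1 by (simp add: field_simps)

lemma beta_pos: "0 < beta" using alpha K by (simp add: beta_def)

lemma beta_K: "2 * beta * K = \<alpha>" using K by (simp add: beta_def)

lemma ab_ge0: "0 \<le> ab"
  unfolding ab_def ab2_def using lam0 by simp

lemma ab_lt1: "ab < 1"
proof -
  have d: "0 < 2 + beta * R" using beta_pos R_pos by (smt (verit) mult_pos_pos)
  have "beta * (2 * K) < beta * ((1 - lam) * R)" using R2 beta_pos by simp
  then have "2 + 2 * beta * K + beta * lam * R < 2 + beta * R" by (simp add: algebra_simps)
  then have "ab1 < 1" unfolding ab1_def using d by simp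
  moreover have "ab2 < 1" unfolding ab2_def using alpha lam1 by simp
  ultimately show ?thesis by (simp add: ab_def)
qed

lemma case1_arith:
  assumes S: "R < S" and M: "0 \<le> M"
  shows "M * (2 + beta * (lam * S + 2 * K)) \<le> ab * (M * (2 + beta * S))"
proof -
  have d: "0 < 2 + beta * R" using beta_pos R_pos by (smt (verit) mult_pos_pos)
  have dS: "0 < 2 + beta * S" using beta_pos R_pos S by (smt (verit) mult_pos_pos)
  have "(2 + 2 * beta * K + beta * lam * R) * (2 + beta * S) - (2 + 2 * beta * K + beta * lam * S) * (2 + beta * R)
      = beta * (S - R) * (2 + 2 * beta * K - 2 * lam)"
    by (simp add: algebra_simps)
  also have "\<dots> \<ge> 0"
  proof -
    have "0 \<le> 2 + 2 * beta * K - 2 * lam" using beta_pos K lam1 by (smt (verit) mult_pos_pos)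
    then show ?thesis using beta_pos S by (intro mult_nonneg_nonneg) auto
  qed
  finally have "(2 + 2 * beta * K + beta * lam * S) * (2 + beta * R) \<le> (2 + 2 * beta * K + beta * lam * R) * (2 + beta * S)"
    by simp
  then have "(2 + 2 * beta * K + beta * lam * S) \<le> ab1 * (2 + beta * S)"
    unfolding ab1_def using d by (simp add: field_simps)
  also have "\<dots> \<le> ab * (2 + beta * S)" using dS by (intro mult_right_mono) (auto simp: ab_def)
  finally have "2 + beta * (lam * S + 2 * K) \<le> ab * (2 + beta * S)" by (simp add: algebra_simps)
  then have "M * (2 + beta * (lam * S + 2 * K)) \<le> M * (ab * (2 + beta * S))"
    using M by (rule mult_left_mono)
  then show ?thesis by (simp add: algebra_simps)
qed

lemma case2_arith:
  assumes S: "0 \<le> S" and M: "0 \<le> M"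
  shows "M * (2 - 2 * \<alpha> + beta * (lam * S + 2 * K)) \<le> ab * (M * (2 + beta * S))"
proof -
  have "2 - 2 * \<alpha> + beta * (lam * S + 2 * K) = (2 - \<alpha>) + lam * (beta * S)"
    using beta_K by (simp add: algebra_simps)
  also have "\<dots> \<le> 2 * ab2 + ab2 * (beta * S)"
  proof (rule add_mono)
    show "2 - \<alpha> \<le> 2 * ab2" unfolding ab2_def by (auto simp: max_def)
    show "lam * (beta * S) \<le> ab2 * (beta * S)"
      using beta_pos S by (intro mult_right_mono) (auto simp: ab2_def)
  qed
  also have "\<dots> = ab2 * (2 + beta * S)" by (simp add: algebra_simps)
  also have "\<dots> \<le> ab * (2 + beta * S)"
    using beta_pos S by (intro mult_right_mono) (auto simp: ab_def)
  finally have "M * (2 - 2 * \<alpha> + beta * (lam * S + 2 * K)) \<le> M * (ab * (2 + beta * S))"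
    using M by (rule mult_left_mono)
  then show ?thesis by (simp add: algebra_simps)
qed

lemma contract:
  assumes hm: "h \<in> borel_measurable state_space" and hb: "\<And>y. 0 \<le> y \<Longrightarrow> \<bar>h y\<bar> \<le> B"
    and hM: "\<And>z z'. 0 \<le> z \<Longrightarrow> 0 \<le> z' \<Longrightarrow> \<bar>h z - h z'\<bar> \<le> M * (2 + beta * z + beta * z')"
    and M: "0 \<le> M" and x: "0 \<le> x" and x': "0 \<le> x'"
  shows "\<bar>(\<integral>y. h y \<partial>Q x) - (\<integral>y. h y \<partial>Q x')\<bar> \<le> ab * (M * (2 + beta * x + beta * x'))"
proof -
  define c where "c = (SUP z\<in>{0..}. h z - M * (1 + beta * z))"
  have bdd: "bdd_above ((\<lambda>z. h z - M * (1 + beta * z)) ` {0..})"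
  proof (rule bdd_aboveI2)
    fix z :: real assume "z \<in> {0..}"
    then have "h z - h 0 \<le> M * (2 + beta * z + beta * 0)" using hM[of z 0] by auto
    then show "h z - M * (1 + beta * z) \<le> h 0 + M" by (simp add: algebra_simps)
  qed
  have c1: "h z - c \<le> M * (1 + beta * z)" if z: "0 \<le> z" for z
  proof -
    have "h z - M * (1 + beta * z) \<le> c" unfolding c_def by (rule cSUP_upper[OF _ bdd]) (use z in simp)
    then show ?thesis by simp
  qed
  have c2: "c - h z \<le> M * (1 + beta * z)" if z: "0 \<le> z" for z
  proof -
    have "c \<le> h z + M * (1 + beta * z)" unfolding c_def
    proof (rule cSUP_least)
      fix z' :: real assume "z' \<in> {0..}"
      then have "h z' - h z \<le> M * (2 + beta * z' + beta * z)" using hM[of z' z] z by auto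
      then show "h z' - M * (1 + beta * z') \<le> h z + M * (1 + beta * z)" by (simp add: algebra_simps)
    qed simp
    then show ?thesis by simp
  qed
  have gabs: "\<bar>h z - c\<bar> \<le> M * (1 + beta * z)" if "0 \<le> z" for z
    using c1[OF that] c2[OF that] by simp
  have ih: "integrable (Q u) h" if u: "0 \<le> u" for u
  proof -
    interpret prob_space "Q u" using Qp u by simp
    show ?thesis
      by (rule integrable_const_bound[where B=B]) (use u hb measurable_cong_sets[OF Q_sets[OF u] refl] hm in auto)
  qed
  have iV: "integrable (Q u) (\<lambda>y. M * (1 + beta * y))" if u: "0 \<le> u" for u
  proof -
    interpret prob_space "Q u" using Qp u by simp
    show ?thesis
      by (intro integrable_mult_right Bochner_Integration.integrable_add integrable_const Q_V(1)[OF u])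
  qed
  have shift: "(\<integral>y. h y - c \<partial>Q u) = (\<integral>y. h y \<partial>Q u) - c" if u: "0 \<le> u" for u
  proof -
    interpret prob_space "Q u" using Qp u by simp
    show ?thesis using ih[OF u] by (simp add: prob_space)
  qed
  have intV: "(\<integral>y. M * (1 + beta * y) \<partial>Q u) = M + M * beta * (\<integral>y. y \<partial>Q u)" if u: "0 \<le> u" for u
  proof -
    interpret prob_space "Q u" using Qp u by simp
    show ?thesis using Q_V(1)[OF u] by (simp add: prob_space algebra_simps)
  qed
  have EV: "M * beta * (\<integral>y. y \<partial>Q u) \<le> M * beta * (lam * u + K)" if u: "0 \<le> u" for u
    using Q_V(2)[OF u] M beta_pos by (intro mult_left_mono) auto
  have b1: "\<bar>(\<integral>y. h y \<partial>Q u) - c\<bar> \<le> M + M * beta * (lam * u + K)" if u: "0 \<le> u" for u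
  proof -
    interpret prob_space "Q u" using Qp u by simp
    have "\<bar>(\<integral>y. h y - c \<partial>Q u)\<bar> \<le> (\<integral>y. M * (1 + beta * y) \<partial>Q u)"
      by (rule integral_abs_bound_integral)
        (use Bochner_Integration.integrable_diff[OF ih[OF u] integrable_const] iV[OF u] gabs u in auto)
    then show ?thesis using shift[OF u] intV[OF u] EV[OF u] by simp
  qed
  have b2: "\<bar>(\<integral>y. h y \<partial>Q u) - c - \<alpha> * (h 0 - c)\<bar> \<le> M - \<alpha> * M + M * beta * (lam * u + K)"
    if u: "0 \<le> u" "u \<le> R" for u
  proof -
    interpret prob_space "Q u" using Qp u by simp
    have f1: "\<alpha> * (M * (1 + beta * 0) + (h 0 - c)) \<le> (\<integral>y. M * (1 + beta * y) + (h y - c) \<partial>Q u)"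
      apply (rule minor_int[OF u])
      subgoal by (rule Bochner_Integration.integrable_add[OF iV[OF u(1)] Bochner_Integration.integrable_diff[OF ih[OF u(1)] integrable_const]])
      subgoal for y using gabs[of y] by (simp add: abs_le_iff)
      done
    have f2: "\<alpha> * (M * (1 + beta * 0) - (h 0 - c)) \<le> (\<integral>y. M * (1 + beta * y) - (h y - c) \<partial>Q u)"
      apply (rule minor_int[OF u])
      subgoal by (rule Bochner_Integration.integrable_diff[OF iV[OF u(1)] Bochner_Integration.integrable_diff[OF ih[OF u(1)] integrable_const]])
      subgoal for y using gabs[of y] by (simp add: abs_le_iff)
      done
    have e1: "(\<integral>y. M * (1 + beta * y) + (h y - c) \<partial>Q u) = (M + M * beta * (\<integral>y. y \<partial>Q u)) + ((\<integral>y. h y \<partial>Q u) - c)"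
      using ih[OF u(1)] iV[OF u(1)] intV[OF u(1)] shift[OF u(1)] by simp
    have e2: "(\<integral>y. M * (1 + beta * y) - (h y - c) \<partial>Q u) = (M + M * beta * (\<integral>y. y \<partial>Q u)) - ((\<integral>y. h y \<partial>Q u) - c)"
      using ih[OF u(1)] iV[OF u(1)] intV[OF u(1)] shift[OF u(1)] by simp
    show ?thesis using f1 f2 e1 e2 EV[OF u(1)] by (simp add: abs_le_iff algebra_simps)
  qed
  show ?thesis
  proof (cases "x + x' \<le> R")
    case True
    then have xR: "x \<le> R" "x' \<le> R" using x x' by auto
    have "\<bar>(\<integral>y. h y \<partial>Q x) - (\<integral>y. h y \<partial>Q x')\<bar>
        \<le> \<bar>(\<integral>y. h y \<partial>Q x) - c - \<alpha> * (h 0 - c)\<bar> + \<bar>(\<integral>y. h y \<partial>Q x') - c - \<alpha> * (h 0 - c)\<bar>"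
      by simp
    also have "\<dots> \<le> (M - \<alpha> * M + M * beta * (lam * x + K)) + (M - \<alpha> * M + M * beta * (lam * x' + K))"
      by (intro add_mono b2) (use x x' xR in auto)
    also have "\<dots> = M * (2 - 2 * \<alpha> + beta * (lam * (x + x') + 2 * K))" by (simp add: algebra_simps)
    also have "\<dots> \<le> ab * (M * (2 + beta * (x + x')))" by (rule case2_arith) (use x x' M in auto)
    finally show ?thesis by (simp add: algebra_simps)
  next
    case False
    have "\<bar>(\<integral>y. h y \<partial>Q x) - (\<integral>y. h y \<partial>Q x')\<bar> \<le> \<bar>(\<integral>y. h y \<partial>Q x) - c\<bar> + \<bar>(\<integral>y. h y \<partial>Q x') - c\<bar>"
      by simp
    also have "\<dots> \<le> (M + M * beta * (lam * x + K)) + (M + M * beta * (lam * x' + K))"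
      by (intro add_mono b1 x x')
    also have "\<dots> = M * (2 + beta * (lam * (x + x') + 2 * K))" by (simp add: algebra_simps)
    also have "\<dots> \<le> ab * (M * (2 + beta * (x + x')))" by (rule case1_arith) (use False M in auto)
    finally show ?thesis by (simp add: algebra_simps)
  qed
qed

end


context chain
begin

definition "EE = 2 + beta * (K / (1 - lam))"

lemma EE_pos: "0 \<le> EE"
  unfolding EE_def using beta_pos K lam1 by (simp add: less_imp_le)

lemma measure_Qn_bounds:
  assumes "0 \<le> y" shows "0 \<le> measure (Qn Q n y) A" "measure (Qn Q n y) A \<le> 1"
proof -
  interpret prob_space "Qn Q n y" using Qn_prob assms by simp
  show "0 \<le> measure (Qn Q n y) A" "measure (Qn Q n y) A \<le> 1" by auto
qed

lemma osc:
  assumes A: "A \<in> sets state_space"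
  shows "0 \<le> x \<Longrightarrow> 0 \<le> x' \<Longrightarrow>
    \<bar>measure (Qn Q n x) A - measure (Qn Q n x') A\<bar> \<le> ab ^ n * (2 + beta * x + beta * x')"
proof (induction n arbitrary: x x')
  case 0
  have "\<bar>measure (Qn Q 0 x) A - measure (Qn Q 0 x') A\<bar> \<le> 1"
    using measure_Qn_bounds[OF 0(1), of 0 A] measure_Qn_bounds[OF 0(2), of 0 A] by linarith
  also have "1 \<le> ab ^ 0 * (2 + beta * x + beta * x')"
    using 0 beta_pos by simp
  finally show ?case .
next
  case (Suc n)
  have "\<bar>(\<integral>y. measure (Qn Q n y) A \<partial>Q x) - (\<integral>y. measure (Qn Q n y) A \<partial>Q x')\<bar>
      \<le> ab * (ab ^ n * (2 + beta * x + beta * x'))"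
  proof (rule contract[where B=1])
    show "(\<lambda>y. measure (Qn Q n y) A) \<in> borel_measurable state_space" using A by measurable
    fix y :: real assume "0 \<le> y"
    then show "\<bar>measure (Qn Q n y) A\<bar> \<le> 1" using measure_Qn_bounds[of y n A] by simp
  qed (use Suc ab_ge0 in auto)
  then show ?case using measure_Qn_Suc[OF Suc.prems(1) A] measure_Qn_Suc[OF Suc.prems(2) A]
    by (simp add: mult.assoc)
qed

lemma cauchy0:
  assumes A: "A \<in> sets state_space"
  shows "\<bar>measure (Qn Q (k + n) 0) A - measure (Qn Q n 0) A\<bar> \<le> ab ^ n * EE"
proof -
  interpret P: prob_space "Qn Q k 0" using Qn_prob by simp
  have m: "(\<lambda>y. measure (Qn Q n y) A) \<in> borel_measurable (Qn Q k 0)"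
    using measurable_cong_sets[OF Qn_sets[of 0 k] refl] measure_Qn_meas[OF A] by blast
  have ih: "integrable (Qn Q k 0) (\<lambda>y. measure (Qn Q n y) A)"
    by (rule P.integrable_const_bound[where B=1]) (use m measure_Qn_bounds in auto)
  have iV: "integrable (Qn Q k 0) (\<lambda>y. ab ^ n * (2 + beta * y + beta * 0))"
    using Qn_V(1)[of k] by auto
  have "measure (Qn Q (k + n) 0) A - measure (Qn Q n 0) A
      = (\<integral>y. measure (Qn Q n y) A - measure (Qn Q n 0) A \<partial>Qn Q k 0)"
    using measure_Qn_CK[of 0 A k n] A ih P.prob_space Qn_space[of 0 k] by simp
  also have "\<bar>\<dots>\<bar> \<le> (\<integral>y. ab ^ n * (2 + beta * y + beta * 0) \<partial>Qn Q k 0)"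
  proof (rule integral_abs_bound_integral)
    show "integrable (Qn Q k 0) (\<lambda>y. measure (Qn Q n y) A - measure (Qn Q n 0) A)"
      by (rule Bochner_Integration.integrable_diff[OF ih]) simp
    show "integrable (Qn Q k 0) (\<lambda>y. ab ^ n * (2 + beta * y + beta * 0))" by (rule iV)
    fix y assume "y \<in> space (Qn Q k 0)"
    then have "0 \<le> y" by simp
    then show "\<bar>measure (Qn Q n y) A - measure (Qn Q n 0) A\<bar> \<le> ab ^ n * (2 + beta * y + beta * 0)"
      using osc[OF A, of y 0 n] by simp
  qed
  also have "\<dots> = ab ^ n * (2 + beta * (\<integral>y. y \<partial>Qn Q k 0))"
    using Qn_V(1)[of k] P.prob_space Qn_space[of 0 k] by (simp add: algebra_simps)
  also have "\<dots> \<le> ab ^ n * EE"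
    unfolding EE_def using Qn_V(2)[of k] beta_pos ab_ge0
    by (intro mult_left_mono add_left_mono) auto
  finally show ?thesis .
qed

lemma conv0:
  assumes A: "A \<in> sets state_space"
  shows "convergent (\<lambda>n. measure (Qn Q n 0) A)"
proof (rule Cauchy_convergent, rule metric_CauchyI)
  fix e :: real assume e: "0 < e"
  have "(\<lambda>n. ab ^ n * EE) \<longlonglongrightarrow> 0 * EE"
    by (intro tendsto_mult tendsto_const LIMSEQ_power_zero) (use ab_ge0 ab_lt1 in auto)
  then have "\<forall>\<^sub>F n in sequentially. ab ^ n * EE < e / 2"
    using e by (intro order_tendstoD(2)) auto
  then obtain N where N: "\<And>n. N \<le> n \<Longrightarrow> ab ^ n * EE < e / 2"
    by (auto simp: eventually_sequentially)
  show "\<exists>M. \<forall>m\<ge>M. \<forall>n\<ge>M. dist (measure (Qn Q m 0) A) (measure (Qn Q n 0) A) < e"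
  proof (intro exI allI impI)
    fix m n assume mn: "N \<le> m" "N \<le> n"
    have a: "\<bar>measure (Qn Q m 0) A - measure (Qn Q N 0) A\<bar> \<le> ab ^ N * EE"
      using cauchy0[OF A, of "m - N" N] mn by simp
    have b: "\<bar>measure (Qn Q n 0) A - measure (Qn Q N 0) A\<bar> \<le> ab ^ N * EE"
      using cauchy0[OF A, of "n - N" N] mn by simp
    show "dist (measure (Qn Q m 0) A) (measure (Qn Q n 0) A) < e"
      using a b N[of N] by (simp add: dist_real_def)
  qed
qed

definition "mu0 A = lim (\<lambda>n. measure (Qn Q n 0) A)"

lemma mu0_lim: "A \<in> sets state_space \<Longrightarrow> (\<lambda>n. measure (Qn Q n 0) A) \<longlonglongrightarrow> mu0 A"
  unfolding mu0_def using conv0 by (simp add: convergent_LIMSEQ_iff)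

lemma mu0_bound:
  assumes A: "A \<in> sets state_space"
  shows "\<bar>measure (Qn Q n 0) A - mu0 A\<bar> \<le> ab ^ n * EE"
proof -
  have "(\<lambda>k. measure (Qn Q (k + n) 0) A) \<longlonglongrightarrow> mu0 A"
    using LIMSEQ_ignore_initial_segment[OF mu0_lim[OF A], of n] by simp
  then have "(\<lambda>k. \<bar>measure (Qn Q (k + n) 0) A - measure (Qn Q n 0) A\<bar>) \<longlonglongrightarrow> \<bar>mu0 A - measure (Qn Q n 0) A\<bar>"
    by (intro tendsto_intros)
  then have "\<bar>mu0 A - measure (Qn Q n 0) A\<bar> \<le> ab ^ n * EE"
    by (rule LIMSEQ_le_const2) (use cauchy0[OF A] in auto)
  then show ?thesis by simp
qed

lemma geo_bound:
  assumes A: "A \<in> sets state_space" and w: "0 \<le> w"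
  shows "\<bar>measure (Qn Q n w) A - mu0 A\<bar> \<le> (2 + beta * w + EE) * ab ^ n"
proof -
  have "\<bar>measure (Qn Q n w) A - measure (Qn Q n 0) A\<bar> \<le> ab ^ n * (2 + beta * w + beta * 0)"
    by (rule osc[OF A w]) simp
  with mu0_bound[OF A, of n] show ?thesis by (simp add: algebra_simps)
qed

lemma mu0_range: "A \<in> sets state_space \<Longrightarrow> 0 \<le> mu0 A \<and> mu0 A \<le> 1"
  using LIMSEQ_le_const[OF mu0_lim, of A 0] LIMSEQ_le_const2[OF mu0_lim, of A 1] measure_Qn_bounds[of 0]
  by auto

lemma mu0_space: "mu0 {0..} = 1"
proof -
  have "(\<lambda>n. measure (Qn Q n 0) {0..}) \<longlonglongrightarrow> mu0 {0..}" by (rule mu0_lim) (simp add: sets_ss_iff)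
  moreover have "measure (Qn Q n 0) {0..} = 1" for n
  proof -
    interpret prob_space "Qn Q n 0" using Qn_prob by simp
    show ?thesis using prob_space Qn_space[of 0 n] by simp
  qed
  ultimately show ?thesis using LIMSEQ_unique[of "\<lambda>n. 1" "mu0 {0..}" 1] by simp
qed

lemma mu0_add:
  assumes A: "A \<in> sets state_space" and B: "B \<in> sets state_space" and d: "A \<inter> B = {}"
  shows "mu0 (A \<union> B) = mu0 A + mu0 B"
proof -
  have AB: "A \<union> B \<in> sets state_space" using A B by auto
  have "measure (Qn Q n 0) (A \<union> B) = measure (Qn Q n 0) A + measure (Qn Q n 0) B" for n
  proof -
    interpret prob_space "Qn Q n 0" using Qn_prob by simp
    show ?thesis using A B d by (intro finite_measure_Union) auto
  qed
  then have "(\<lambda>n. measure (Qn Q n 0) (A \<union> B)) \<longlonglongrightarrow> mu0 A + mu0 B"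
    using tendsto_add[OF mu0_lim[OF A] mu0_lim[OF B]] by simp
  with mu0_lim[OF AB] show ?thesis using LIMSEQ_unique by auto
qed

lemma mu0_empty_cont:
  assumes A: "range A \<subseteq> sets state_space" and dec: "decseq A" and e: "(\<Inter>i. A i) = {}"
  shows "(\<lambda>i. mu0 (A i)) \<longlonglongrightarrow> 0"
proof (rule LIMSEQ_I)
  fix r :: real assume r: "0 < r"
  have "(\<lambda>n. ab ^ n * EE) \<longlonglongrightarrow> 0 * EE"
    by (intro tendsto_mult tendsto_const LIMSEQ_power_zero) (use ab_ge0 ab_lt1 in auto)
  then have "\<forall>\<^sub>F n in sequentially. ab ^ n * EE < r / 2"
    using r by (intro order_tendstoD(2)) auto
  then obtain n where n: "ab ^ n * EE < r / 2"
    by (auto simp: eventually_sequentially)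
  interpret P: prob_space "Qn Q n 0" using Qn_prob by simp
  have "(\<lambda>i. measure (Qn Q n 0) (A i)) \<longlonglongrightarrow> measure (Qn Q n 0) (\<Inter>i. A i)"
    by (rule P.finite_Lim_measure_decseq) (use A dec in auto)
  then have "(\<lambda>i. measure (Qn Q n 0) (A i)) \<longlonglongrightarrow> 0" using e by simp
  then have "\<forall>\<^sub>F i in sequentially. measure (Qn Q n 0) (A i) < r / 2"
    using r by (intro order_tendstoD(2)) auto
  then obtain N where N: "\<And>i. N \<le> i \<Longrightarrow> measure (Qn Q n 0) (A i) < r / 2"
    by (auto simp: eventually_sequentially)
  show "\<exists>no. \<forall>i\<ge>no. norm (mu0 (A i) - 0) < r"
  proof (intro exI allI impI)
    fix i assume "N \<le> i"
    then have "measure (Qn Q n 0) (A i) < r / 2" by (rule N)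
    moreover have "\<bar>measure (Qn Q n 0) (A i) - mu0 (A i)\<bar> \<le> ab ^ n * EE"
      using mu0_bound A by auto
    moreover have "0 \<le> mu0 (A i)" using mu0_range A by auto
    ultimately show "norm (mu0 (A i) - 0) < r" using n by simp
  qed
qed

end


lemma floor_approx:
  fixes k :: nat and t :: real
  assumes k: "0 < k" and t: "0 \<le> t" "t \<le> 1"
  shows "\<bar>t - real (card {j\<in>{1..k}. real j \<le> real k * t}) / real k\<bar> \<le> 1 / real k"
proof -
  define m where "m = nat \<lfloor>real k * t\<rfloor>"
  have fl0: "0 \<le> \<lfloor>real k * t\<rfloor>" using t by simp
  have mk: "m \<le> k"
  proof -
    have "real k * t \<le> real k" using t by (simp add: mult_left_le)
    then have "\<lfloor>real k * t\<rfloor> \<le> \<lfloor>real k\<rfloor>" by (rule floor_mono)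
    then have "\<lfloor>real k * t\<rfloor> \<le> int k" by simp
    then show ?thesis unfolding m_def by simp
  qed
  have set: "{j\<in>{1..k}. real j \<le> real k * t} = {1..m}"
  proof (intro set_eqI iffI)
    fix j assume "j \<in> {j\<in>{1..k}. real j \<le> real k * t}"
    then have "1 \<le> j" "real j \<le> real k * t" by auto
    then have "int j \<le> \<lfloor>real k * t\<rfloor>" by (simp add: le_floor_iff)
    then show "j \<in> {1..m}" using \<open>1 \<le> j\<close> unfolding m_def by auto
  next
    fix j assume j: "j \<in> {1..m}"
    then have "int j \<le> \<lfloor>real k * t\<rfloor>" using fl0 unfolding m_def by auto
    then have "real j \<le> real k * t" by (simp add: le_floor_iff)
    then show "j \<in> {j\<in>{1..k}. real j \<le> real k * t}" using j mk by auto
  qed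
  have c: "card {j\<in>{1..k}. real j \<le> real k * t} = m" unfolding set by simp
  have m1: "real m \<le> real k * t" unfolding m_def using fl0 by simp
  have m2: "real k * t < real m + 1" unfolding m_def using fl0 by linarith
  have kpos: "0 < real k" using k by simp
  have "\<bar>real k * t - real m\<bar> \<le> 1" using m1 m2 by simp
  then have "\<bar>t - real m / real k\<bar> * real k \<le> 1"
    using kpos by (simp add: abs_mult[symmetric] field_simps)
  then show ?thesis unfolding c using kpos by (simp add: field_simps)
qed

lemma TV_int:
  assumes M: "prob_space M" and N: "prob_space N"
    and sM: "sets M = sets state_space" and sN: "sets N = sets state_space"
    and eps: "\<And>B. B \<in> sets state_space \<Longrightarrow> \<bar>measure M B - measure N B\<bar> \<le> \<epsilon>"
    and h: "h \<in> borel_measurable state_space" and h01: "\<And>y. 0 \<le> y \<Longrightarrow> 0 \<le> h y \<and> h y \<le> 1"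
  shows "\<bar>(\<integral>y. h y \<partial>M) - (\<integral>y. h y \<partial>N)\<bar> \<le> \<epsilon>"
proof (rule field_le_epsilon)
  fix e :: real assume e: "0 < e"
  obtain k :: nat where k: "2 / e < real k" using reals_Archimedean2 by blast
  have "0 < 2 / e" using e by simp
  then have "0 < real k" using k by linarith
  then have kpos: "0 < k" by simp
  have ke: "2 / real k < e" using k e kpos by (simp add: field_simps)
  interpret M: prob_space M by (rule M)
  interpret N: prob_space N by (rule N)
  have spM: "space M = {0..}" using sets_eq_imp_space_eq[OF sM] by simp
  have spN: "space N = {0..}" using sets_eq_imp_space_eq[OF sN] by simp
  define B where "B j = {y\<in>{0..}. real j \<le> real k * h y}" for j :: nat
  have B: "B j \<in> sets state_space" for j
  proof -
    have "{y\<in>space state_space. real j \<le> real k * h y} \<in> sets state_space" using h by measurable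
    then show ?thesis by (simp add: B_def)
  qed
  define hk where "hk y = (\<Sum>j\<in>{1..k}. indicator (B j) y) / real k" for y
  have iM: "integrable M (\<lambda>y. indicator (B j) y :: real)" for j
    using B sM M.emeasure_finite by (intro integrable_real_indicator) (auto simp: less_top[symmetric])
  have iN: "integrable N (\<lambda>y. indicator (B j) y :: real)" for j
    using B sN N.emeasure_finite by (intro integrable_real_indicator) (auto simp: less_top[symmetric])
  have hkM: "integrable M hk" "integrable N hk"
    unfolding hk_def using iM iN by (auto intro!: Bochner_Integration.integrable_sum integrable_divide)
  have hMi: "integrable M h"
    by (rule M.integrable_const_bound[where B=1]) (use h h01 spM measurable_cong_sets[OF sM refl] in auto)
  have hNi: "integrable N h"
    by (rule N.integrable_const_bound[where B=1]) (use h h01 spN measurable_cong_sets[OF sN refl] in auto)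
  have eps0: "0 \<le> \<epsilon>" using eps[of "{}"] by simp
  have intk: "(\<integral>y. hk y \<partial>P) = (\<Sum>j\<in>{1..k}. measure P (B j)) / real k"
    if P: "sets P = sets state_space" and PP: "prob_space P" for P
  proof -
    interpret PP: prob_space P by (rule PP)
    have spP: "space P = {0..}" using sets_eq_imp_space_eq[OF P] by simp
    have Bs: "B j \<in> sets P" for j using B P by simp
    have "(\<integral>y. hk y \<partial>P) = (\<integral>y. (\<Sum>j\<in>{1..k}. indicator (B j) y) \<partial>P) / real k"
      unfolding hk_def by (rule integral_divide_zero)
    also have "(\<integral>y. (\<Sum>j\<in>{1..k}. indicator (B j) y) \<partial>P) = (\<Sum>j\<in>{1..k}. (\<integral>y. indicator (B j) y \<partial>P) :: real)"
    proof (rule Bochner_Integration.integral_sum)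
      fix j assume "j \<in> {1..k}"
      show "integrable P (\<lambda>y. indicator (B j) y :: real)"
        using Bs[of j] PP.emeasure_finite[of "B j"] by (intro integrable_real_indicator) (auto simp: less_top[symmetric])
    qed
    also have "\<dots> = (\<Sum>j\<in>{1..k}. measure P (B j))"
      using spP by (intro sum.cong refl) (auto simp: B_def Int_absorb2 subset_eq)
    finally show ?thesis .
  qed
  have d1: "\<bar>(\<integral>y. hk y \<partial>M) - (\<integral>y. hk y \<partial>N)\<bar> \<le> \<epsilon>"
  proof -
    have "\<bar>(\<Sum>j\<in>{1..k}. measure M (B j)) - (\<Sum>j\<in>{1..k}. measure N (B j))\<bar>
        = \<bar>\<Sum>j\<in>{1..k}. measure M (B j) - measure N (B j)\<bar>" by (simp add: sum_subtractf)
    also have "\<dots> \<le> (\<Sum>j\<in>{1..k}. \<bar>measure M (B j) - measure N (B j)\<bar>)" by (rule sum_abs)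
    also have "\<dots> \<le> (\<Sum>j\<in>{1..k}. \<epsilon>)" by (intro sum_mono eps B)
    also have "\<dots> = real k * \<epsilon>" by simp
    finally have "\<bar>(\<Sum>j\<in>{1..k}. measure M (B j)) - (\<Sum>j\<in>{1..k}. measure N (B j))\<bar> \<le> real k * \<epsilon>" .
    then show ?thesis using kpos
      by (simp add: intk[OF sM M] intk[OF sN N] diff_divide_distrib[symmetric] field_simps)
  qed
  have pt: "\<bar>h y - hk y\<bar> \<le> 1 / real k" if y: "0 \<le> y" for y
  proof -
    have "(\<Sum>j\<in>{1..k}. indicator (B j) y) = (\<Sum>j\<in>{1..k}. (indicator {j. real j \<le> real k * h y} j :: real))"
      using y by (intro sum.cong refl) (simp add: B_def indicator_def)
    also have "\<dots> = (\<Sum>j\<in>{1..k} \<inter> {j. real j \<le> real k * h y}. (1::real))"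
      by (simp add: sum.inter_restrict indicator_def)
    also have "\<dots> = real (card ({1..k} \<inter> {j. real j \<le> real k * h y}))" by simp
    also have "{1..k} \<inter> {j. real j \<le> real k * h y} = {j\<in>{1..k}. real j \<le> real k * h y}" by auto
    finally have "hk y = real (card {j\<in>{1..k}. real j \<le> real k * h y}) / real k"
      by (simp add: hk_def)
    then show ?thesis using floor_approx[OF kpos, of "h y"] h01[OF y] by simp
  qed
  have d2: "\<bar>(\<integral>y. h y \<partial>P) - (\<integral>y. hk y \<partial>P)\<bar> \<le> 1 / real k"
    if P: "prob_space P" "sets P = sets state_space" "integrable P h" "integrable P hk" for P
  proof -
    interpret P: prob_space P by (rule P(1))
    have spP: "space P = {0..}" using sets_eq_imp_space_eq[OF P(2)] by simp
    have "\<bar>(\<integral>y. h y - hk y \<partial>P)\<bar> \<le> (\<integral>y. 1 / real k \<partial>P)"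
      by (rule integral_abs_bound_integral) (use P(3,4) pt spP in auto)
    then show ?thesis using P(3,4) by (simp add: P.prob_space)
  qed
  have "\<bar>(\<integral>y. h y \<partial>M) - (\<integral>y. h y \<partial>N)\<bar>
      \<le> \<bar>(\<integral>y. h y \<partial>M) - (\<integral>y. hk y \<partial>M)\<bar> + \<bar>(\<integral>y. hk y \<partial>M) - (\<integral>y. hk y \<partial>N)\<bar>
        + \<bar>(\<integral>y. h y \<partial>N) - (\<integral>y. hk y \<partial>N)\<bar>" by simp
  also have "\<dots> \<le> 1 / real k + \<epsilon> + 1 / real k"
    by (intro add_mono d1 d2 M N sM sN hMi hNi hkM)
  finally show "\<bar>(\<integral>y. h y \<partial>M) - (\<integral>y. h y \<partial>N)\<bar> \<le> \<epsilon> + e" using ke by simp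
qed


context chain
begin

lemma ss_sigma: "sigma_algebra {0..} (sets state_space)"
  using sets.sigma_algebra_axioms[of state_space] by simp

lemma mu0_empty: "mu0 {} = 0"
  using mu0_add[of "{}" "{}"] by simp

lemma mu0_ms: "measure_space {0..} (sets state_space) (\<lambda>A. ennreal (mu0 A))"
  unfolding measure_space_def
proof (intro conjI ss_sigma)
  show pos: "positive (sets state_space) (\<lambda>A. ennreal (mu0 A))"
    by (simp add: positive_def mu0_empty)
  have rs: "ring_of_sets {0..} (sets state_space)"
    using ss_sigma by (simp add: sigma_algebra_def algebra_def)
  show "countably_additive (sets state_space) (\<lambda>A. ennreal (mu0 A))"
  proof (rule ring_of_sets.empty_continuous_imp_countably_additive[OF rs pos])
    show "additive (sets state_space) (\<lambda>A. ennreal (mu0 A))"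
      unfolding additive_def
    proof (intro ballI impI)
      fix A B assume A: "A \<in> sets state_space" and B: "B \<in> sets state_space" and d: "A \<inter> B = {}"
      show "ennreal (mu0 (A \<union> B)) = ennreal (mu0 A) + ennreal (mu0 B)"
        using mu0_add[OF A B d] mu0_range[OF A] mu0_range[OF B] by (simp add: ennreal_plus)
    qed
    show "\<forall>A\<in>sets state_space. ennreal (mu0 A) \<noteq> \<infinity>" by simp
    fix A :: "nat \<Rightarrow> real set"
    assume "range A \<subseteq> sets state_space" "decseq A" "(\<Inter>i. A i) = {}"
    from mu0_empty_cont[OF this]
    have "(\<lambda>i. ennreal (mu0 (A i))) \<longlonglongrightarrow> ennreal 0" by (rule tendsto_ennrealI)
    then show "(\<lambda>i. ennreal (mu0 (A i))) \<longlonglongrightarrow> 0" by simp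
  qed
qed

definition "mu = measure_of {0..} (sets state_space) (\<lambda>A. ennreal (mu0 A))"

lemma sets_mu[simp]: "sets mu = sets state_space"
proof -
  have "sets state_space \<subseteq> Pow {0..}" using sets.space_closed[of state_space] by simp
  then show ?thesis unfolding mu_def using sigma_algebra.sigma_sets_eq[OF ss_sigma] by simp
qed

lemma space_mu[simp]: "space mu = {0..}"
  using sets_eq_imp_space_eq[OF sets_mu] by simp

lemma emeasure_mu: "A \<in> sets state_space \<Longrightarrow> emeasure mu A = ennreal (mu0 A)"
  unfolding mu_def using mu0_ms unfolding measure_space_def
  by (intro emeasure_measure_of_sigma) auto

lemma measure_mu: "A \<in> sets state_space \<Longrightarrow> measure mu A = mu0 A"
  using emeasure_mu mu0_range by (simp add: measure_def)

lemma prob_mu: "prob_space mu"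
proof
  have "{0..} \<in> sets state_space" by (simp add: sets_ss_iff)
  then show "emeasure mu (space mu) = 1" using emeasure_mu mu0_space by simp
qed

lemma mu_bound: "A \<in> sets state_space \<Longrightarrow> \<bar>measure (Qn Q n 0) A - measure mu A\<bar> \<le> ab ^ n * EE"
  using mu0_bound measure_mu by simp

lemma ab_pow_lim: "(\<lambda>n. c * ab ^ n) \<longlonglongrightarrow> 0"
proof -
  have "(\<lambda>n. c * ab ^ n) \<longlonglongrightarrow> c * 0"
    by (intro tendsto_mult tendsto_const LIMSEQ_power_zero) (use ab_ge0 ab_lt1 in auto)
  then show ?thesis by simp
qed

lemma zero_from_bound:
  assumes "\<And>n. \<bar>d\<bar> \<le> c * ab ^ n"
  shows "d = 0"
proof -
  have "\<bar>d\<bar> \<le> 0"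
    by (rule LIMSEQ_le_const[OF ab_pow_lim[of c]]) (use assms in auto)
  then show ?thesis by simp
qed

lemma mu_inv_real:
  assumes A: "A \<in> sets state_space"
  shows "measure mu A = (\<integral>y. measure (Q y) A \<partial>mu)"
proof (rule eq_iff_diff_eq_0[THEN iffD2], rule zero_from_bound[where c="2 * EE"])
  fix n
  have hm: "(\<lambda>y. measure (Q y) A) \<in> borel_measurable state_space" using A by measurable
  have h01: "0 \<le> measure (Q y) A \<and> measure (Q y) A \<le> 1" if "0 \<le> y" for y
  proof -
    interpret prob_space "Q y" using Qp that by simp
    show ?thesis by simp
  qed
  have e1: "measure (Qn Q (Suc n) 0) A = (\<integral>y. measure (Q y) A \<partial>Qn Q n 0)"
  proof -
    have "measure (Qn Q (n + 1) 0) A = (\<integral>y. measure (Qn Q 1 y) A \<partial>Qn Q n 0)"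
      by (rule measure_Qn_CK[OF _ A]) simp
    also have "\<dots> = (\<integral>y. measure (Q y) A \<partial>Qn Q n 0)"
      apply (rule Bochner_Integration.integral_cong[OF refl])
      apply (subst Q_Qn1)
       apply simp
      apply (rule refl)
      done
    finally show ?thesis by simp
  qed
  have t1: "\<bar>(\<integral>y. measure (Q y) A \<partial>Qn Q n 0) - (\<integral>y. measure (Q y) A \<partial>mu)\<bar> \<le> ab ^ n * EE"
    by (rule TV_int[OF Qn_prob prob_mu Qn_sets sets_mu _ hm h01]) (use mu_bound in auto)
  have t2: "\<bar>measure (Qn Q (Suc n) 0) A - measure mu A\<bar> \<le> ab ^ Suc n * EE"
    by (rule mu_bound[OF A])
  have "ab * ab ^ n \<le> 1 * ab ^ n"
    using ab_ge0 ab_lt1 by (intro mult_right_mono) auto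
  then have "ab ^ Suc n * EE \<le> ab ^ n * EE"
    using EE_pos by (intro mult_right_mono) auto
  then show "\<bar>measure mu A - (\<integral>y. measure (Q y) A \<partial>mu)\<bar> \<le> 2 * EE * ab ^ n"
    using t1 t2 e1 by (simp add: algebra_simps)
qed

lemma Q_kernel_mu: "Q \<in> mu \<rightarrow>\<^sub>M subprob_algebra state_space"
  using Qm measurable_cong_sets[OF sets_mu refl] by blast

lemma mu_inv:
  assumes A: "A \<in> sets state_space"
  shows "emeasure mu A = (\<integral>\<^sup>+w. emeasure (Q w) A \<partial>mu)"
proof -
  interpret M: prob_space mu by (rule prob_mu)
  have hm: "(\<lambda>y. measure (Q y) A) \<in> borel_measurable mu"
    using A measurable_cong_sets[OF sets_mu refl] measure_Q_meas by blast
  have "(\<integral>\<^sup>+w. emeasure (Q w) A \<partial>mu) = (\<integral>\<^sup>+w. ennreal (measure (Q w) A) \<partial>mu)"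
  proof (rule nn_integral_cong)
    fix w assume "w \<in> space mu"
    then have w: "0 \<le> w" by simp
    interpret prob_space "Q w" using Qp w by simp
    show "emeasure (Q w) A = ennreal (measure (Q w) A)" by (rule emeasure_eq_measure)
  qed
  also have "\<dots> = ennreal (\<integral>w. measure (Q w) A \<partial>mu)"
  proof (rule nn_integral_eq_integral)
    show "integrable mu (\<lambda>w. measure (Q w) A)"
    proof (rule M.integrable_const_bound[where B=1])
      show "AE x in mu. norm (measure (Q x) A) \<le> 1"
      proof (rule AE_I2)
        fix w assume "w \<in> space mu"
        then have w: "0 \<le> w" by simp
        interpret prob_space "Q w" using Qp w by simp
        show "norm (measure (Q w) A) \<le> 1" by simp
      qed
    qed (rule hm)
  qed simp
  also have "\<dots> = ennreal (measure mu A)" using mu_inv_real[OF A] by simp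
  also have "\<dots> = emeasure mu A" using M.emeasure_eq_measure by simp
  finally show ?thesis ..
qed

end


context chain
begin

lemma unique:
  assumes sN: "sets \<nu> = sets state_space" and pN: "prob_space \<nu>"
    and inv: "\<And>A. A \<in> sets state_space \<Longrightarrow> emeasure \<nu> A = (\<integral>\<^sup>+w. emeasure (Q w) A \<partial>\<nu>)"
  shows "\<nu> = mu"
proof -
  interpret N: prob_space \<nu> by (rule pN)
  have spN: "space \<nu> = {0..}" using sets_eq_imp_space_eq[OF sN] by simp
  have Qk: "Q \<in> \<nu> \<rightarrow>\<^sub>M subprob_algebra state_space"
    using Qm measurable_cong_sets[OF sN refl] by blast
  have bindeq: "bind \<nu> Q = \<nu>"
  proof (rule measure_eqI)
    show sb: "sets (bind \<nu> Q) = sets \<nu>"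
      using sets_bind[of \<nu> Q state_space] sN spN by simp
    fix A assume "A \<in> sets (bind \<nu> Q)"
    then have A: "A \<in> sets state_space" using sb sN by simp
    show "emeasure (bind \<nu> Q) A = emeasure \<nu> A"
      using emeasure_bind[OF _ Qk A] spN inv[OF A] by simp
  qed
  have iter: "emeasure \<nu> A = (\<integral>\<^sup>+w. emeasure (Qn Q n w) A \<partial>\<nu>)" if A: "A \<in> sets state_space" for A n
  proof (induction n)
    case 0
    have "(\<integral>\<^sup>+w. emeasure (Qn Q 0 w) A \<partial>\<nu>) = (\<integral>\<^sup>+w. indicator A w \<partial>\<nu>)"
      using A by (intro nn_integral_cong) simp
    also have "\<dots> = emeasure \<nu> A" using A sN by simp
    finally show ?case ..
  next
    case (Suc n)
    have mk: "(\<lambda>y. emeasure (Qn Q n y) A) \<in> borel_measurable state_space"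
      using measurable_emeasure_kernel[OF Qn_meas A] .
    have "(\<integral>\<^sup>+w. emeasure (Qn Q (Suc n) w) A \<partial>\<nu>) = (\<integral>\<^sup>+w. \<integral>\<^sup>+y. emeasure (Qn Q n y) A \<partial>Q w \<partial>\<nu>)"
    proof (rule nn_integral_cong)
      fix w assume "w \<in> space \<nu>"
      then have w: "0 \<le> w" using spN by simp
      have m: "Qn Q n \<in> Q w \<rightarrow>\<^sub>M subprob_algebra state_space"
        using Qn_meas measurable_cong_sets[OF Q_sets[OF w] refl] by blast
      show "emeasure (Qn Q (Suc n) w) A = (\<integral>\<^sup>+y. emeasure (Qn Q n y) A \<partial>Q w)"
        using emeasure_bind[OF _ m A] w by simp
    qed
    also have "\<dots> = (\<integral>\<^sup>+y. emeasure (Qn Q n y) A \<partial>bind \<nu> Q)"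
      by (rule nn_integral_bind[symmetric, OF mk Qk])
    also have "\<dots> = emeasure \<nu> A" using Suc bindeq by simp
    finally show ?case ..
  qed
  have bnd: "0 \<le> measure (Qn Q n w) A \<and> measure (Qn Q n w) A \<le> 1" if "w \<in> space \<nu>" for w n A
    using measure_Qn_bounds[of w n A] that spN by simp
  have real: "measure \<nu> A = (\<integral>w. measure (Qn Q n w) A \<partial>\<nu>)" if A: "A \<in> sets state_space" for A n
  proof -
    have m: "(\<lambda>w. measure (Qn Q n w) A) \<in> borel_measurable \<nu>"
      using measure_Qn_meas[OF A] measurable_cong_sets[OF sN refl] by blast
    have int: "integrable \<nu> (\<lambda>w. measure (Qn Q n w) A)"
      by (rule N.integrable_const_bound[where B=1]) (use m bnd in auto)
    have "ennreal (measure \<nu> A) = emeasure \<nu> A" using N.emeasure_eq_measure by simp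
    also have "\<dots> = (\<integral>\<^sup>+w. emeasure (Qn Q n w) A \<partial>\<nu>)" by (rule iter[OF A])
    also have "\<dots> = (\<integral>\<^sup>+w. ennreal (measure (Qn Q n w) A) \<partial>\<nu>)"
    proof (rule nn_integral_cong)
      fix w assume "w \<in> space \<nu>"
      then have w: "0 \<le> w" using spN by simp
      interpret prob_space "Qn Q n w" using Qn_prob w by simp
      show "emeasure (Qn Q n w) A = ennreal (measure (Qn Q n w) A)" by (rule emeasure_eq_measure)
    qed
    also have "\<dots> = ennreal (\<integral>w. measure (Qn Q n w) A \<partial>\<nu>)"
      by (rule nn_integral_eq_integral[OF int]) simp
    finally have "ennreal (measure \<nu> A) = ennreal (\<integral>w. measure (Qn Q n w) A \<partial>\<nu>)" .
    then show ?thesis by (simp add: ennreal_inj integral_nonneg_AE)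
  qed
  show ?thesis
  proof (rule measure_eqI)
    show "sets \<nu> = sets mu" using sN by simp
    fix A assume "A \<in> sets \<nu>"
    then have A: "A \<in> sets state_space" using sN by simp
    have lim: "(\<lambda>n. \<integral>w. measure (Qn Q n w) A \<partial>\<nu>) \<longlonglongrightarrow> (\<integral>w. mu0 A \<partial>\<nu>)"
    proof (rule integral_dominated_convergence[where w="\<lambda>_. 1"])
      show "(\<lambda>w. mu0 A) \<in> borel_measurable \<nu>" by simp
      fix n show "(\<lambda>w. measure (Qn Q n w) A) \<in> borel_measurable \<nu>"
        using measure_Qn_meas[OF A] measurable_cong_sets[OF sN refl] by blast
    next
      show "integrable \<nu> (\<lambda>_. 1::real)" by simp
    next
      show "AE w in \<nu>. (\<lambda>n. measure (Qn Q n w) A) \<longlonglongrightarrow> mu0 A"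
      proof (rule AE_I2)
        fix w assume "w \<in> space \<nu>"
        then have w: "0 \<le> w" using spN by simp
        have "(\<lambda>n. measure (Qn Q n w) A - mu0 A) \<longlonglongrightarrow> 0"
        proof (rule Lim_null_comparison[OF _ ab_pow_lim[of "2 + beta * w + EE"]])
          show "\<forall>\<^sub>F n in sequentially. norm (measure (Qn Q n w) A - mu0 A) \<le> (2 + beta * w + EE) * ab ^ n"
            using geo_bound[OF A w] by simp
        qed
        then show "(\<lambda>n. measure (Qn Q n w) A) \<longlonglongrightarrow> mu0 A" by (simp add: LIM_zero_iff)
      qed
    next
      fix n show "AE w in \<nu>. norm (measure (Qn Q n w) A) \<le> 1"
        using bnd by (intro AE_I2) auto
    qed
    then have "(\<lambda>n. measure \<nu> A) \<longlonglongrightarrow> mu0 A"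
      using real[OF A] N.prob_space spN by simp
    then have "measure \<nu> A = mu0 A" using LIMSEQ_const_iff by blast
    then show "emeasure \<nu> A = emeasure mu A"
      using N.emeasure_eq_measure emeasure_mu[OF A] by simp
  qed
qed

lemma mu_zero_pos: "0 < emeasure mu {0}"
proof -
  define c0 where "c0 = \<alpha> - \<alpha> / R * (K / (1 - lam))"
  have Rp: "0 < R" by (rule R_pos)
  have KR: "K / (1 - lam) < R"
  proof -
    have "K / (1 - lam) < 2 * K / (1 - lam)" using K lam1 by (simp add: divide_strict_right_mono)
    then show ?thesis using R by simp
  qed
  have c0: "0 < c0"
  proof -
    have "\<alpha> / R * (K / (1 - lam)) < \<alpha> / R * R"
      using KR alpha Rp by (intro mult_strict_left_mono) auto
    then show ?thesis unfolding c0_def using Rp by simp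
  qed
  have z: "{0} \<in> sets state_space" by (simp add: sets_ss_iff)
  have seq: "c0 \<le> measure (Qn Q (Suc k) 0) {0}" for k
  proof -
    interpret P: prob_space "Qn Q k 0" using Qn_prob by simp
    have m: "(\<lambda>y. measure (Q y) {0}) \<in> borel_measurable (Qn Q k 0)"
      using measure_Q_meas[OF z] measurable_cong_sets[OF Qn_sets[of 0 k] refl] by blast
    have iq: "integrable (Qn Q k 0) (\<lambda>y. measure (Q y) {0})"
    proof (rule P.integrable_const_bound[where B=1])
      show "AE x in Qn Q k 0. norm (measure (Q x) {0}) \<le> 1"
      proof (rule AE_I2)
        fix y assume "y \<in> space (Qn Q k 0)"
        then have y: "0 \<le> y" by simp
        interpret prob_space "Q y" using Qp y by simp
        show "norm (measure (Q y) {0}) \<le> 1" by simp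
      qed
    qed (rule m)
    have iV: "integrable (Qn Q k 0) (\<lambda>y. \<alpha> - \<alpha> / R * y)"
      using Qn_V(1)[of k] by simp
    have e1: "measure (Qn Q (Suc k) 0) {0} = (\<integral>y. measure (Q y) {0} \<partial>Qn Q k 0)"
    proof -
      have "measure (Qn Q (k + 1) 0) {0} = (\<integral>y. measure (Qn Q 1 y) {0} \<partial>Qn Q k 0)"
        by (rule measure_Qn_CK[OF _ z]) simp
      also have "\<dots> = (\<integral>y. measure (Q y) {0} \<partial>Qn Q k 0)"
        apply (rule Bochner_Integration.integral_cong[OF refl])
        apply (subst Q_Qn1)
         apply simp
        apply (rule refl)
        done
      finally show ?thesis by simp
    qed
    have "c0 \<le> \<alpha> - \<alpha> / R * (\<integral>y. y \<partial>Qn Q k 0)"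
      unfolding c0_def using Qn_V(2)[of k] alpha Rp by (intro diff_left_mono mult_left_mono) auto
    also have "\<dots> = (\<integral>y. \<alpha> - \<alpha> / R * y \<partial>Qn Q k 0)"
      using Qn_V(1)[of k] P.prob_space Qn_space[of 0 k] by simp
    also have "\<dots> \<le> (\<integral>y. measure (Q y) {0} \<partial>Qn Q k 0)"
    proof (rule integral_mono[OF iV iq])
      fix y assume "y \<in> space (Qn Q k 0)"
      then have y: "0 \<le> y" by simp
      interpret prob_space "Q y" using Qp y by simp
      show "\<alpha> - \<alpha> / R * y \<le> measure (Q y) {0}"
      proof (cases "y \<le> R")
        case True
        have "ennreal \<alpha> \<le> emeasure (Q y) {0}" by (rule minor[OF y True])
        then have "\<alpha> \<le> measure (Q y) {0}" by (simp add: emeasure_eq_measure)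
        moreover have "0 \<le> \<alpha> / R * y" using alpha Rp y by simp
        ultimately show ?thesis by linarith
      next
        case False
        then have "\<alpha> / R * R \<le> \<alpha> / R * y" using alpha Rp by (intro mult_left_mono) auto
        then have "\<alpha> - \<alpha> / R * y \<le> 0" using Rp by simp
        then show ?thesis using measure_nonneg[of "Q y" "{0}"] by linarith
      qed
    qed
    finally show ?thesis using e1 by simp
  qed
  have "(\<lambda>k. measure (Qn Q (Suc k) 0) {0}) \<longlonglongrightarrow> mu0 {0}"
    using LIMSEQ_Suc[OF mu0_lim[OF z]] .
  then have "c0 \<le> mu0 {0}" by (rule LIMSEQ_le_const) (use seq in auto)
  then have "0 < mu0 {0}" using c0 by simp
  then show ?thesis using emeasure_mu[OF z] by simp
qed

end


lemma ref_meas_sets[simp]: "sets ref_meas = sets state_space"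
proof -
  have "sets state_space \<subseteq> Pow {0..}" using sets.space_closed[of state_space] by simp
  then show ?thesis unfolding ref_meas_def
    using sets.sigma_sets_eq[of state_space] by simp
qed

lemma ref_meas_emeasure:
  assumes A: "A \<in> sets state_space"
  shows "emeasure ref_meas A = indicator A 0 + emeasure lborel A"
proof -
  have sa: "sigma_algebra {0..} (sets state_space)"
    using sets.sigma_algebra_axioms[of state_space] by simp
  have pos: "positive (sets state_space) (\<lambda>A. indicator A 0 + emeasure lborel A)"
    by (simp add: positive_def)
  have ca: "countably_additive (sets state_space) (\<lambda>A. indicator A 0 + emeasure lborel A)"
    unfolding countably_additive_def
  proof (intro allI impI)
    fix F :: "nat \<Rightarrow> real set"
    assume F: "range F \<subseteq> sets state_space" and d: "disjoint_family F" and U: "\<Union> (range F) \<in> sets state_space"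
    have Fb: "range F \<subseteq> sets lborel" using F sets_ss_borel by auto
    have Ub: "\<Union> (range F) \<in> sets lborel" using U sets_ss_borel by auto
    have l: "(\<Sum>i. emeasure lborel (F i)) = emeasure lborel (\<Union>i. F i)"
      using emeasure_countably_additive[of lborel] Fb d Ub unfolding countably_additive_def by blast
    have "(\<Sum>i. indicator (F i) 0 + emeasure lborel (F i)) = (\<Sum>i. indicator (F i) (0::real)) + (\<Sum>i. emeasure lborel (F i))"
      by (rule suminf_add[symmetric]) auto
    also have "\<dots> = indicator (\<Union>i. F i) 0 + emeasure lborel (\<Union>i. F i)"
      using suminf_indicator[OF d] l by simp
    finally show "(\<Sum>i. indicator (F i) 0 + emeasure lborel (F i)) = indicator (\<Union> (range F)) 0 + emeasure lborel (\<Union> (range F))" .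
  qed
  show ?thesis unfolding ref_meas_def by (rule emeasure_measure_of_sigma[OF sa pos ca A])
qed


theorem proposition9:
  fixes \<sigma> \<gamma>bar c_inf :: real and \<tau> :: "real \<Rightarrow> real \<Rightarrow> real"
  assumes "\<sigma> > 0" and "\<gamma>bar > 0" and "c_inf \<ge> 0"
    and tau_maps: "\<And>\<gamma> r. 0 < \<gamma> \<Longrightarrow> \<gamma> \<le> \<gamma>bar \<Longrightarrow> r \<ge> 0 \<Longrightarrow> \<tau> \<gamma> r \<ge> 0"
    and tau_mono: "\<And>\<gamma>. 0 < \<gamma> \<Longrightarrow> \<gamma> \<le> \<gamma>bar \<Longrightarrow> mono_on {0..} (\<tau> \<gamma>)"
    and tau_zero: "\<And>\<gamma>. 0 < \<gamma> \<Longrightarrow> \<gamma> \<le> \<gamma>bar \<Longrightarrow> \<tau> \<gamma> 0 = 0"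
    and contr: "\<exists>R1 L m. R1 \<ge> 0 \<and> L \<ge> 0 \<and> m > 0 \<and>
        (\<forall>\<gamma>. 0 < \<gamma> \<and> \<gamma> \<le> \<gamma>bar \<longrightarrow>
           (\<forall>r > 0. \<tau> \<gamma> r / r \<le> 1 + \<gamma> * L) \<and>
           (\<forall>r > R1. \<tau> \<gamma> r / r \<le> 1 - \<gamma> * m))"
  shows "\<forall>\<gamma>. 0 < \<gamma> \<and> \<gamma> \<le> \<gamma>bar \<longrightarrow>
     (\<exists>\<mu>. invariant_prob \<sigma> c_inf \<tau> \<gamma> \<mu>
        \<and> (\<forall>\<nu>. invariant_prob \<sigma> c_inf \<tau> \<gamma> \<nu> \<longrightarrow> \<nu> = \<mu>)
        \<and> geom_ergodic \<sigma> c_inf \<tau> \<gamma> \<mu>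
        \<and> emeasure \<mu> {0} > 0
        \<and> absolutely_continuous ref_meas \<mu>
        \<and> (c_inf \<noteq> 0 \<longrightarrow> absolutely_continuous \<mu> ref_meas))"
proof (intro allI impI)
  fix \<gamma> assume g: "0 < \<gamma> \<and> \<gamma> \<le> \<gamma>bar"
  then have gam: "0 < \<gamma>" and gle: "\<gamma> \<le> \<gamma>bar" by auto
  have sig: "0 < \<sigma>" by fact
  have c0: "0 \<le> c_inf" by fact
  from contr obtain R1 L m where R1: "R1 \<ge> 0" and L: "L \<ge> 0" and m: "m > 0"
    and call: "\<forall>\<gamma>. 0 < \<gamma> \<and> \<gamma> \<le> \<gamma>bar \<longrightarrow>
           (\<forall>r > 0. \<tau> \<gamma> r / r \<le> 1 + \<gamma> * L) \<and>
           (\<forall>r > R1. \<tau> \<gamma> r / r \<le> 1 - \<gamma> * m)"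
    by (elim exE conjE)
  from call g have c1: "\<And>r. r > 0 \<Longrightarrow> \<tau> \<gamma> r / r \<le> 1 + \<gamma> * L"
    and c2: "\<And>r. r > R1 \<Longrightarrow> \<tau> \<gamma> r / r \<le> 1 - \<gamma> * m"
    by auto
  have tpos: "\<And>r. 0 \<le> r \<Longrightarrow> 0 \<le> \<tau> \<gamma> r" using tau_maps gam gle by blast
  have t0: "\<tau> \<gamma> 0 = 0" using tau_zero gam gle by blast
  define A where "A w = \<tau> \<gamma> w + \<gamma> * c_inf" for w
  have Apos: "0 \<le> A w" if "0 \<le> w" for w using tpos[OF that] gam c0 by (simp add: A_def)
  define lam where "lam = 1 - \<gamma> * m"
  have lam1: "lam < 1" using gam m by (simp add: lam_def)
  have lam0: "0 \<le> lam"
  proof -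
    have "\<tau> \<gamma> (R1 + 1) / (R1 + 1) \<le> lam" using c2[of "R1 + 1"] by (simp add: lam_def)
    moreover have "0 \<le> \<tau> \<gamma> (R1 + 1) / (R1 + 1)" using tpos[of "R1 + 1"] R1 by simp
    ultimately show ?thesis by linarith
  qed
  have tbound: "\<tau> \<gamma> x \<le> lam * x + (1 + \<gamma> * L) * R1" if x: "0 \<le> x" for x
  proof (cases "x = 0")
    case True then show ?thesis using t0 R1 L gam by simp
  next
    case False
    then have xp: "0 < x" using x by simp
    show ?thesis
    proof (cases "x \<le> R1")
      case True
      have "\<tau> \<gamma> x \<le> (1 + \<gamma> * L) * x" using c1[OF xp] xp by (simp add: divide_le_eq)
      also have "\<dots> \<le> (1 + \<gamma> * L) * R1" using True L gam by (intro mult_left_mono) auto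
      moreover have "0 \<le> lam * x" using lam0 x by simp
      ultimately show ?thesis by linarith
    next
      case False
      then have "\<tau> \<gamma> x \<le> lam * x" using c2[of x] xp by (simp add: divide_le_eq lam_def)
      moreover have "0 \<le> (1 + \<gamma> * L) * R1" using R1 L gam by simp
      ultimately show ?thesis by linarith
    qed
  qed
  define K where "K = (1 + \<gamma> * L) * R1 + \<gamma> * c_inf + 2 * \<sigma> * sqrt \<gamma> + 1"
  have Kpos: "0 < K"
  proof -
    have "0 \<le> (1 + \<gamma> * L) * R1" "0 \<le> \<gamma> * c_inf" "0 \<le> 2 * \<sigma> * sqrt \<gamma>"
      using R1 L gam c0 sig by simp_all
    then show ?thesis unfolding K_def by linarith
  qed
  have Ab: "A x + 2 * \<sigma> * sqrt \<gamma> \<le> lam * x + K" if "0 \<le> x" for x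
    using tbound[OF that] unfolding A_def K_def by simp
  define R where "R = 2 * K / (1 - lam) + 1"
  have R: "2 * K / (1 - lam) < R" by (simp add: R_def)
  define s2 where "s2 = 2 * \<sigma> * sqrt \<gamma>"
  have s2: "0 < s2" using sig gam by (simp add: s2_def)
  define t where "t = (lam * R + K) / s2"
  have Rpos: "0 < R"
  proof -
    have "0 < 2 * K / (1 - lam)" using Kpos lam1 by simp
    then show ?thesis unfolding R_def by linarith
  qed
  have tnn: "0 \<le> t" unfolding t_def using lam0 Rpos Kpos s2 by simp
  define \<alpha> where "\<alpha> = phi (t + 1)"
  have alpha: "0 < \<alpha>" by (simp add: \<alpha>_def phi_pos)
  define Qk where "Qk w = Kmeas \<sigma> \<gamma> (A w)" for w
  have tau_meas: "\<tau> \<gamma> \<in> borel_measurable state_space"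
    unfolding state_space_def by (rule borel_measurable_mono_on_fnc[OF tau_mono[OF gam gle]])
  have A_meas: "A \<in> borel_measurable state_space"
    unfolding A_def using tau_meas by measurable
  have Qeq: "Qmeas \<sigma> c_inf \<tau> \<gamma> w = Qk w" if "0 \<le> w" for w
    unfolding Qk_def A_def by (rule Qmeas_Kmeas[OF sig gam]) (use Apos[OF that] in \<open>simp add: A_def\<close>)
  have Qm': "Qk \<in> state_space \<rightarrow>\<^sub>M subprob_algebra state_space"
    unfolding Qk_def by (rule measurable_compose[OF A_meas Kmeas_measurable[OF sig gam]])
  have Qp': "prob_space (Qk x)" for x unfolding Qk_def by (rule Kmeas_prob[OF sig gam])
  have drift': "(\<integral>\<^sup>+y. ennreal y \<partial>Qk x) \<le> ennreal (lam * x + K)" if x: "0 \<le> x" for x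
  proof -
    have "(\<integral>\<^sup>+y. ennreal y \<partial>Qk x) \<le> ennreal (A x + 2 * \<sigma> * sqrt \<gamma>)"
      unfolding Qk_def by (rule Kmeas_drift[OF sig gam Apos[OF x]])
    also have "\<dots> \<le> ennreal (lam * x + K)" using Ab[OF x] by (rule ennreal_leI)
    finally show ?thesis .
  qed
  have minor': "ennreal \<alpha> \<le> emeasure (Qk x) {0}" if x: "0 \<le> x" "x \<le> R" for x
  proof -
    have "A x \<le> lam * x + K" using Ab[OF x(1)] s2 by (simp add: s2_def)
    also have "\<dots> \<le> lam * R + K" using x lam0 by (simp add: mult_left_mono)
    also have "\<dots> = 2 * \<sigma> * sqrt \<gamma> * t"
    proof -
      have "s2 * t = lam * R + K" unfolding t_def using s2 by simp
      then show ?thesis by (simp add: s2_def)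
    qed
    finally have "A x \<le> 2 * \<sigma> * sqrt \<gamma> * t" .
    then show ?thesis unfolding Qk_def \<alpha>_def by (rule Kmeas_zero[OF sig gam Apos[OF x(1)] tnn])
  qed
  interpret chain Qk lam K R \<alpha>
    by (intro chain.intro Qm' Qp' drift' lam0 lam1 Kpos R alpha minor')
  have Qpow_eq: "Qpow \<sigma> c_inf \<tau> \<gamma> n w B = measure (Qn Qk n w) B"
    if B: "B \<in> sets state_space" and w: "0 \<le> w" for n w B
    using w
  proof (induction n arbitrary: w)
    case 0
    show ?case using B by (simp add: measure_return)
  next
    case (Suc n)
    have "Qpow \<sigma> c_inf \<tau> \<gamma> (Suc n) w B = (LINT y|Qmeas \<sigma> c_inf \<tau> \<gamma> w. Qpow \<sigma> c_inf \<tau> \<gamma> n y B)"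
      by simp
    also have "\<dots> = (LINT y|Qk w. measure (Qn Qk n y) B)"
      unfolding Qeq[OF Suc.prems]
      by (rule Bochner_Integration.integral_cong[OF refl]) (use Suc.prems Suc.IH in simp)
    also have "\<dots> = measure (Qn Qk (Suc n) w) B"
      using measure_Qn_Suc[OF Suc.prems B] by simp
    finally show ?case .
  qed
  have inv_conv: "(\<integral>\<^sup>+w. emeasure (Qmeas \<sigma> c_inf \<tau> \<gamma> w) B \<partial>M) = (\<integral>\<^sup>+w. emeasure (Qk w) B \<partial>M)"
    if "sets M = sets state_space" for M B
  proof (rule nn_integral_cong)
    fix w assume "w \<in> space M"
    then have "0 \<le> w" using sets_eq_imp_space_eq[OF that] by simp
    then show "emeasure (Qmeas \<sigma> c_inf \<tau> \<gamma> w) B = emeasure (Qk w) B" using Qeq by simp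
  qed
  have mu_pos: "0 < emeasure mu {0}" by (rule mu_zero_pos)
  show "\<exists>\<mu>. invariant_prob \<sigma> c_inf \<tau> \<gamma> \<mu>
        \<and> (\<forall>\<nu>. invariant_prob \<sigma> c_inf \<tau> \<gamma> \<nu> \<longrightarrow> \<nu> = \<mu>)
        \<and> geom_ergodic \<sigma> c_inf \<tau> \<gamma> \<mu>
        \<and> emeasure \<mu> {0} > 0
        \<and> absolutely_continuous ref_meas \<mu>
        \<and> (c_inf \<noteq> 0 \<longrightarrow> absolutely_continuous \<mu> ref_meas)"
  proof (intro exI[of _ mu] conjI allI impI)
    show "invariant_prob \<sigma> c_inf \<tau> \<gamma> mu"
      unfolding invariant_prob_def using prob_mu mu_inv inv_conv[OF sets_mu] by simp
  next
    fix \<nu> assume "invariant_prob \<sigma> c_inf \<tau> \<gamma> \<nu>"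
    then have sN: "sets \<nu> = sets state_space" and pN: "prob_space \<nu>"
      and iN: "\<And>B. B \<in> sets state_space \<Longrightarrow> emeasure \<nu> B = (\<integral>\<^sup>+w. emeasure (Qmeas \<sigma> c_inf \<tau> \<gamma> w) B \<partial>\<nu>)"
      unfolding invariant_prob_def by auto
    show "\<nu> = mu"
      by (rule unique[OF sN pN]) (use iN inv_conv[OF sN] in simp)
  next
    show "geom_ergodic \<sigma> c_inf \<tau> \<gamma> mu"
      unfolding geom_ergodic_def
    proof (intro exI[of _ ab] conjI exI[of _ "\<lambda>w. 2 + beta * w + EE"] allI impI ab_ge0 ab_lt1)
      fix w :: real and n assume w: "0 \<le> w"
      show "tv_dist \<sigma> c_inf \<tau> \<gamma> mu n w \<le> (2 + beta * w + EE) * ab ^ n"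
        unfolding tv_dist_def
      proof (rule cSUP_least)
        show "sets state_space \<noteq> {}" using sets.empty_sets by blast
        fix B assume B: "B \<in> sets state_space"
        show "\<bar>Qpow \<sigma> c_inf \<tau> \<gamma> n w B - measure mu B\<bar> \<le> (2 + beta * w + EE) * ab ^ n"
          using Qpow_eq[OF B w] measure_mu[OF B] geo_bound[OF B w] by simp
      qed
    qed
  next
    show "0 < emeasure mu {0}" by (rule mu_pos)
  next
    show "absolutely_continuous ref_meas mu"
      unfolding absolutely_continuous_def
    proof
      fix B assume "B \<in> null_sets ref_meas"
      then have B: "B \<in> sets state_space" and B0: "emeasure ref_meas B = 0"
        by (auto simp: null_sets_def)
      then have "indicator B 0 + emeasure lborel B = 0" using ref_meas_emeasure by simp
      then have n0: "0 \<notin> B" and nl: "emeasure lborel B = 0"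
        by (auto simp: indicator_def split: if_splits)
      have "emeasure mu B = (\<integral>\<^sup>+w. emeasure (Qk w) B \<partial>mu)" by (rule mu_inv[OF B])
      also have "\<dots> = (\<integral>\<^sup>+w. 0 \<partial>mu)"
        unfolding Qk_def by (intro nn_integral_cong Kmeas_null1[OF sig gam B n0 nl])
      finally show "B \<in> null_sets mu" using B by (simp add: null_sets_def)
    qed
  next
    assume cne: "c_inf \<noteq> 0"
    show "absolutely_continuous mu ref_meas"
      unfolding absolutely_continuous_def
    proof
      fix B assume "B \<in> null_sets mu"
      then have B: "B \<in> sets state_space" and B0: "emeasure mu B = 0"
        by (auto simp: null_sets_def)
      have z: "{0} \<in> sets state_space" by (simp add: sets_ss_iff)
      have "(\<integral>\<^sup>+w. emeasure (Qk 0) B * indicator {0} w \<partial>mu) \<le> (\<integral>\<^sup>+w. emeasure (Qk w) B \<partial>mu)"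
        by (intro nn_integral_mono) (auto simp: indicator_def)
      also have "\<dots> = 0" using mu_inv[OF B] B0 by simp
      finally have "emeasure (Qk 0) B * emeasure mu {0} = 0"
        using z by (simp add: nn_integral_cmult_indicator)
      then have K0: "emeasure (Qk 0) B = 0" using mu_pos by auto
      have a0: "0 < A 0" unfolding A_def using t0 gam c0 cne by simp
      have nl: "emeasure lborel B = 0"
        by (rule Kmeas_null2[OF sig gam a0 B]) (use K0 in \<open>simp add: Qk_def\<close>)
      have n0: "0 \<notin> B"
      proof
        assume "0 \<in> B"
        then have "emeasure mu {0} \<le> emeasure mu B" using B by (intro emeasure_mono) auto
        then show False using B0 mu_pos by simp
      qed
      have "emeasure ref_meas B = 0" using ref_meas_emeasure[OF B] n0 nl by simp
      then show "B \<in> null_sets ref_meas" using B by (simp add: null_sets_def)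
    qed
  qed
qed


end
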